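(* Let $(G,\mathbf p)$ be a framework (with $\mathbf p$ pinned with $\ell$-dimensional affine span) with $\dim(K)=1$, let $E$ be a stiff-bar energy at $\mathbf p$, and let $f(\delta\mathbf p)=E(\mathbf p+\delta\mathbf p)-E(\mathbf p)$ on $\ell$-pinned configuration space. Let $k\ge2$ be an integer and suppose that $(G,\mathbf p)$ has a $(1,k-1)$-flex $$\mathbf p(t)=\mathbf p+\mathbf p't+\mathbf p''t^2+\cdots+\mathbf p^{(k-1)}t^{k-1}$$ with $|\mathbf p'|=1$ and $\mathbf p^{(j)}\in\overline K$ for $2\le j\le k-1$. Then the family $$\delta\mathbf p(t;y_0,\mathbf p_0^{(k)})=y_0\mathbf p't+y_0^2\mathbf p''t^2+\cdots+y_0^{k-1}\mathbf p^{(k-1)}t^{k-1}+\mathbf p_0^{(k)}t^k,$$ parameterized by $(y_0,\mathbf p_0^{(k)})$ in the unit sphere of $\mathbb R\times\overline K$, is indicative at order $2k$ for $f$ (at the origin).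
   Context: Fix a dimension $d$. A configuration is $\mathbf p=(\mathbf p_1,\dots,\mathbf p_n)$, $\mathbf p_i\in\mathbb R^d$; a framework $(G,\mathbf p)$ consists of a graph $G$ on $\{1,\dots,n\}$ and a configuration. A configuration $\mathbf q$ is in $\ell$-pinned position if $\mathbf q_1=0$ and, for $2\le i\le\ell+1$, $\mathbf q_i\in\mathrm{span}(e_1,\dots,e_{i-1})$; these form the $\ell$-pinned configuration space. $\mathbf p$ is pinned if it has $\ell$-dimensional affine span, $\mathbf p_1,\dots,\mathbf p_{\ell+1}$ are affinely independent, and $\mathbf p$ is in $\ell$-pinned position. All trajectories are $\ell$-pinned. A $C^k$ function $\varphi(t)$ is $k$-vanishing if $\varphi^{(i)}(0)=0$ for $1\le i\le k$, $k$-active if $(k-1)$-vanishing but not $k$-vanishing. With $\mathbf m(\mathbf q)=(|\mathbf q_i-\mathbf q_j|^2)_{ij\in E(G)}$, a $(j,k)$-flex is an analytic non-constant $\ell$-pinned trajectory $\mathbf p(t)$, $\mathbf p(0)=\mathbf p$, that is $j$-active with $\mathbf m(\mathbf p(t))$ $k$-vanishing. $K$ is the linear space of $\ell$-pinned $\mathbf p'$ with $(\mathbf p_v-\mathbf p_w)\cdot(\mathbf p'_v-\mathbf p'_w)=0$ for all edges $vw$, $\overline K$ a fixed complementary subspace. A stiff-bar energy at $\mathbf p$ is $E(\mathbf q)=\sum_{ij\in E(G)}E_{ij}(|\mathbf q_i-\mathbf q_j|)$, each $E_{ij}$ analytic at $d_{ij}=|\mathbf p_i-\mathbf p_j|\ne0$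 with a strict local minimum there and $E_{ij}''(d_{ij})>0$. A family of test trajectories $\{\mathbf z(t;\mathbf z_0)\}_{\mathbf z_0\in S}$ consists of maps defined for $t$ in a common interval $[0,\varepsilon]$, each $t\mapsto\mathbf z(t;\mathbf z_0)$ analytic, non-constant, with $\mathbf z(0;\mathbf z_0)=0$. For a $C^{2k+1}$ function $f$ with a critical point at $0$ and $f(0)=0$, it is indicative at order $2k$ for $f$ if: (I1) $S$ is compact; (I2) $(t,\mathbf z_0)\mapsto\mathbf z(t;\mathbf z_0)$ is $C^{2k+1}$; (I3) for every $0<\delta\le\varepsilon$ there is a neighborhood $U$ of the origin such that every point of $U$ equals $\mathbf z(t;\mathbf z_0)$ for some $\mathbf z_0\in S$, $t\in[0,\delta]$; (I4) for every $\mathbf z_0\in S$ all Taylor coefficients in $t$ of $f(\mathbf z(t;\mathbf z_0))$ of order less than $2k$ vanish. *)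

theory Defs
  imports "HOL-Analysis.Analysis"
begin

text \<open>Configurations: vertices indexed by the finite type 'n, points in real^'d.
  The numbering of vertices 1..n and of coordinate axes e_1..e_d is given by
  bijections vert and ax.\<close>

definition pinned_pos :: "(nat \<Rightarrow> 'n) \<Rightarrow> (nat \<Rightarrow> 'd::finite) \<Rightarrow> nat \<Rightarrow> real^'d^'n \<Rightarrow> bool" where
  "pinned_pos vert ax l q \<longleftrightarrow>
     q $ vert 1 = 0 \<and>
     (\<forall>i\<in>{2..l+1}. q $ vert i \<in> span ((\<lambda>j. axis (ax j) (1::real)) ` {1..i-1}))"

definition pinned_space :: "(nat \<Rightarrow> 'n) \<Rightarrow> (nat \<Rightarrow> 'd::finite) \<Rightarrow> nat \<Rightarrow> (real^'d^'n) set" where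
  "pinned_space vert ax l = {q. pinned_pos vert ax l q}"

definition is_pinned :: "(nat \<Rightarrow> 'n) \<Rightarrow> (nat \<Rightarrow> 'd::finite) \<Rightarrow> nat \<Rightarrow> real^'d^'n \<Rightarrow> bool" where
  "is_pinned vert ax l p \<longleftrightarrow>
     aff_dim (range (\<lambda>v. p $ v)) = int l \<and>
     inj_on (\<lambda>i. p $ vert i) {1..l+1} \<and>
     \<not> affine_dependent ((\<lambda>i. p $ vert i) ` {1..l+1}) \<and>
     pinned_pos vert ax l p"

text \<open>A simple graph, given by an orientation of its edges (each edge listed once).\<close>
definition simple_graph_edges :: "('n \<times> 'n) set \<Rightarrow> bool" where
  "simple_graph_edges Edges \<longleftrightarrow> (\<forall>(i,j)\<in>Edges. i \<noteq> j \<and> (j,i) \<notin> Edges)"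

definition meas :: "real^'d^'n \<Rightarrow> 'n \<times> 'n \<Rightarrow> real" where
  "meas q e = (norm (q $ fst e - q $ snd e))^2"

definition vderiv :: "(real \<Rightarrow> 'a::real_normed_vector) \<Rightarrow> real \<Rightarrow> 'a" where
  "vderiv g = (\<lambda>x. vector_derivative g (at x))"

definition k_vanishing :: "nat \<Rightarrow> (real \<Rightarrow> 'a::real_normed_vector) \<Rightarrow> bool" where
  "k_vanishing k \<phi> \<longleftrightarrow> (\<forall>i\<in>{1..k}. (vderiv ^^ i) \<phi> 0 = 0)"

definition k_active :: "nat \<Rightarrow> (real \<Rightarrow> 'a::real_normed_vector) \<Rightarrow> bool" where
  "k_active k \<phi> \<longleftrightarrow> k_vanishing (k - 1) \<phi> \<and> \<not> k_vanishing k \<phi>"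

definition real_analytic_on :: "real set \<Rightarrow> (real \<Rightarrow> 'a::real_normed_vector) \<Rightarrow> bool" where
  "real_analytic_on S g \<longleftrightarrow>
     (\<forall>x\<in>S. \<exists>r>0. \<exists>a::nat \<Rightarrow> 'a. \<forall>y\<in>ball x r. (\<lambda>n. ((y - x)^n) *\<^sub>R a n) sums g y)"

definition is_flex :: "(nat \<Rightarrow> 'n) \<Rightarrow> (nat \<Rightarrow> 'd::finite) \<Rightarrow> nat \<Rightarrow> ('n \<times> 'n) set
      \<Rightarrow> real^'d^'n \<Rightarrow> (real \<Rightarrow> real^'d^'n) \<Rightarrow> nat \<Rightarrow> nat \<Rightarrow> bool" where
  "is_flex vert ax l Edges p q j k \<longleftrightarrow>
     (\<exists>\<epsilon>>0. real_analytic_on (ball 0 \<epsilon>) q \<and> (\<exists>t\<in>ball 0 \<epsilon>. q t \<noteq> q 0) \<and>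
            (\<forall>t\<in>ball 0 \<epsilon>. pinned_pos vert ax l (q t))) \<and>
     q 0 = p \<and> k_active j q \<and> (\<forall>e\<in>Edges. k_vanishing k (\<lambda>t. meas (q t) e))"

definition Kspace :: "(nat \<Rightarrow> 'n) \<Rightarrow> (nat \<Rightarrow> 'd::finite) \<Rightarrow> nat \<Rightarrow> ('n \<times> 'n) set
      \<Rightarrow> real^'d^'n \<Rightarrow> (real^'d^'n) set" where
  "Kspace vert ax l Edges p =
     {q \<in> pinned_space vert ax l. \<forall>e\<in>Edges. (p $ fst e - p $ snd e) \<bullet> (q $ fst e - q $ snd e) = 0}"

definition is_complement :: "'a::real_vector set \<Rightarrow> 'a set \<Rightarrow> 'a set \<Rightarrow> bool" where
  "is_complement V K Kbar \<longleftrightarrow> subspace Kbar \<and> Kbar \<subseteq> V \<and> K \<inter> Kbar = {0} \<and>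
     V \<subseteq> {a + b | a b. a \<in> K \<and> b \<in> Kbar}"

definition stiff_bar_energy :: "('n \<times> 'n) set \<Rightarrow> real^'d^'n \<Rightarrow> ('n \<times> 'n \<Rightarrow> real \<Rightarrow> real) \<Rightarrow> bool" where
  "stiff_bar_energy Edges p Ee \<longleftrightarrow>
     (\<forall>e\<in>Edges. let d = norm (p $ fst e - p $ snd e) in
        d \<noteq> 0 \<and> real_analytic_on {d} (Ee e) \<and>
        (\<exists>r>0. \<forall>x. 0 < \<bar>x - d\<bar> \<and> \<bar>x - d\<bar> < r \<longrightarrow> Ee e d < Ee e x) \<and>
        deriv (deriv (Ee e)) d > 0)"

definition energy :: "('n \<times> 'n) set \<Rightarrow> ('n \<times> 'n \<Rightarrow> real \<Rightarrow> real) \<Rightarrow> real^'d^'n \<Rightarrow> real" where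
  "energy Edges Ee q = (\<Sum>e\<in>Edges. Ee e (norm (q $ fst e - q $ snd e)))"

text \<open>C^m on an open set U (finite-dimensional domain): iterated Frechet derivatives
  D j x [h_1,...,h_j] up to order m exist and are continuous in x.\<close>
definition Ck_on :: "nat \<Rightarrow> 'a::euclidean_space set \<Rightarrow> ('a \<Rightarrow> 'b::real_normed_vector) \<Rightarrow> bool" where
  "Ck_on m U g \<longleftrightarrow> open U \<and>
     (\<exists>D :: nat \<Rightarrow> 'a \<Rightarrow> 'a list \<Rightarrow> 'b.
        (\<forall>x\<in>U. D 0 x [] = g x) \<and>
        (\<forall>j<m. \<forall>hs. length hs = j \<longrightarrow>
           (\<forall>x\<in>U. ((\<lambda>y. D j y hs) has_derivative (\<lambda>h. D (Suc j) x (h # hs))) (at x))) \<and>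
        (\<forall>j\<le>m. \<forall>hs. length hs = j \<longrightarrow> continuous_on U (\<lambda>y. D j y hs)))"

definition test_family :: "'a::real_normed_vector set \<Rightarrow> real \<Rightarrow> 's set \<Rightarrow> (real \<Rightarrow> 's \<Rightarrow> 'a) \<Rightarrow> bool" where
  "test_family V \<epsilon> S z \<longleftrightarrow> \<epsilon> > 0 \<and>
     (\<forall>z0\<in>S. real_analytic_on {0..\<epsilon>} (\<lambda>t. z t z0) \<and> (\<exists>t\<in>{0..\<epsilon>}. z t z0 \<noteq> z 0 z0) \<and>
             z 0 z0 = 0 \<and> (\<forall>t\<in>{0..\<epsilon>}. z t z0 \<in> V))"

definition indicative :: "'a::euclidean_space set \<Rightarrow> real \<Rightarrow> 's::euclidean_space set
      \<Rightarrow> (real \<Rightarrow> 's \<Rightarrow> 'a) \<Rightarrow> ('a \<Rightarrow> real) \<Rightarrow> nat \<Rightarrow> bool" where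
  "indicative V \<epsilon> S z f k \<longleftrightarrow>
     test_family V \<epsilon> S z \<and>
     compact S \<and>
     (\<exists>U. {0..\<epsilon>} \<times> S \<subseteq> U \<and> Ck_on (2*k+1) U (\<lambda>(t,z0). z t z0)) \<and>
     (\<forall>\<delta>. 0 < \<delta> \<and> \<delta> \<le> \<epsilon> \<longrightarrow>
        (\<exists>r>0. \<forall>q\<in>V. norm q < r \<longrightarrow> (\<exists>z0\<in>S. \<exists>t\<in>{0..\<delta>}. q = z t z0))) \<and>
     (\<forall>z0\<in>S. \<forall>i<2*k. (vderiv ^^ i) (\<lambda>t. f (z t z0)) 0 = 0)"

end

theory Submission
  imports Defs "HOL-Complex_Analysis.Complex_Analysis"
begin

no_notation fps_nth (infixl \<open>$\<close> 75)




lemma zmul_deriv: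
  fixes f :: "complex \<Rightarrow> complex"
  assumes "f holomorphic_on S" "open S" "0 \<in> S"
  shows "(deriv ^^ Suc n) (\<lambda>z. z * f z) 0 = of_nat (Suc n) * (deriv ^^ n) f 0"
proof -
  have "(deriv ^^ Suc n) (\<lambda>z. z * f z) 0 =
     (\<Sum>i = 0..Suc n. of_nat (Suc n choose i) * (deriv ^^ i) (\<lambda>w. w) 0 * (deriv ^^ (Suc n - i)) f 0)"
    by (rule higher_deriv_mult) (use assms in \<open>auto intro: holomorphic_intros\<close>)
  also have "\<dots> = (\<Sum>i \<in> {1}. of_nat (Suc n choose i) * (deriv ^^ i) (\<lambda>w. w) 0 * (deriv ^^ (Suc n - i)) f 0)"
    by (rule sum.mono_neutral_right) auto
  finally show ?thesis by simp
qed

lemma zmul_deriv0: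
  fixes f :: "complex \<Rightarrow> complex"
  shows "(deriv ^^ 0) (\<lambda>z. z * f z) 0 = 0"
  by simp

lemma factor_zero:
  fixes G :: "complex \<Rightarrow> complex"
  assumes "G holomorphic_on ball 0 R" "R > 0" "\<forall>i<N. (deriv ^^ i) G 0 = 0"
  shows "\<exists>H. H holomorphic_on ball 0 R \<and> (\<forall>w\<in>ball 0 R. G w = w ^ N * H w)"
  using assms
proof (induction N arbitrary: G)
  case 0
  then show ?case by auto
next
  case (Suc N)
  define G1 where "G1 = (\<lambda>z. if z = 0 then deriv G 0 else (G z - G 0) / (z - 0))"
  have h1: "G1 holomorphic_on ball 0 R" unfolding G1_def
    by (rule pole_lemma[OF Suc.prems(1)]) (use Suc.prems(2) in auto)
  have G0: "G 0 = 0" using Suc.prems(3)[rule_format, of 0] by simp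
  have eq: "G w = w * G1 w" for w
    using G0 by (cases "w = 0") (auto simp: G1_def)
  have "\<forall>i<N. (deriv ^^ i) G1 0 = 0"
  proof (intro allI impI)
    fix i assume "i < N"
    have "(deriv ^^ Suc i) G 0 = (deriv ^^ Suc i) (\<lambda>z. z * G1 z) 0"
      using eq by metis
    also have "\<dots> = of_nat (Suc i) * (deriv ^^ i) G1 0"
      by (rule zmul_deriv[OF h1]) (use Suc.prems(2) in auto)
    finally show "(deriv ^^ i) G1 0 = 0" using Suc.prems(3) \<open>i < N\<close>
      by (metis Suc_less_eq mult_eq_0_iff of_nat_eq_0_iff nat.distinct(1))
  qed
  then obtain H where H: "H holomorphic_on ball 0 R" "\<forall>w\<in>ball 0 R. G1 w = w ^ N * H w"
    using Suc.IH[OF h1 Suc.prems(2)] by blast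
  show ?case
    by (rule exI[of _ H]) (use H eq in auto)
qed

lemma deriv_zero_factor:
  fixes H :: "complex \<Rightarrow> complex"
  assumes "H holomorphic_on ball 0 R" "R > 0" "i < N"
  shows "(deriv ^^ i) (\<lambda>w. w ^ N * H w) 0 = 0"
  using assms(3)
proof (induction N arbitrary: i)
  case 0 then show ?case by simp
next
  case (Suc N)
  have e: "(\<lambda>w. w ^ Suc N * H w) = (\<lambda>w. w * (w ^ N * H w))"
    by (auto simp: algebra_simps)
  have hol: "(\<lambda>w. w ^ N * H w) holomorphic_on ball 0 R"
    by (intro holomorphic_intros assms(1))
  show ?case
  proof (cases i)
    case 0 then show ?thesis by simp
  next
    case (Suc j)
    then have "j < N" using Suc.prems by simp
    then show ?thesis unfolding e Suc
      by (subst zmul_deriv[OF hol]) (use assms(2) Suc.IH in auto)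
  qed
qed

lemma vderiv_funpow_Suc: "(vderiv ^^ Suc i) \<phi> x = vector_derivative ((vderiv ^^ i) \<phi>) (at x)"
  by (simp add: vderiv_def)

lemma vderiv_zero: "(vderiv ^^ i) (\<lambda>x::real. 0::'a::real_normed_vector) = (\<lambda>x. 0)"
proof (induction i)
  case 0 then show ?case by simp
next
  case (Suc i)
  show ?case
    by (rule ext, simp only: vderiv_funpow_Suc Suc, rule vector_derivative_at) simp
qed

lemma real_restrict_deriv:
  fixes G :: "complex \<Rightarrow> complex" and \<phi> :: "real \<Rightarrow> real"
  assumes hol: "G holomorphic_on ball 0 R" and eq: "\<And>x. \<bar>x\<bar> < R \<Longrightarrow> \<phi> x = Re (G (of_real x))"
  shows "\<bar>x\<bar> < R \<Longrightarrow> (vderiv ^^ i) \<phi> x = Re ((deriv ^^ i) G (of_real x))"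
proof (induction i arbitrary: x)
  case 0 then show ?case using eq by simp
next
  case (Suc i)
  have xin: "of_real x \<in> ball (0::complex) R" using Suc.prems by simp
  have d1: "((deriv ^^ i) G has_field_derivative (deriv ^^ Suc i) G (of_real x)) (at (of_real x))"
    by (rule has_field_derivative_higher_deriv[OF hol open_ball xin])
  have d2: "((\<lambda>y. (deriv ^^ i) G (of_real y)) has_vector_derivative (deriv ^^ Suc i) G (of_real x)) (at x)"
    using has_vector_derivative_real_field[OF d1] by simp
  have d3: "((\<lambda>y. Re ((deriv ^^ i) G (of_real y))) has_vector_derivative Re ((deriv ^^ Suc i) G (of_real x))) (at x)"
    by (rule bounded_linear.has_vector_derivative[OF bounded_linear_Re d2])
  have d4: "((vderiv ^^ i) \<phi> has_vector_derivative Re ((deriv ^^ Suc i) G (of_real x))) (at x)"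
    apply (rule has_vector_derivative_transform_within_open[OF d3, of "{-R<..<R}"])
    using Suc.prems Suc.IH by auto
  show ?case
    unfolding vderiv_funpow_Suc by (rule vector_derivative_at[OF d4])
qed



lemma energy_local:
  fixes E :: "real \<Rightarrow> real" and a :: "nat \<Rightarrow> real" and d r :: real
  assumes r: "r > 0" and ser: "\<forall>x\<in>ball d r. (\<lambda>n. ((x - d)^n) *\<^sub>R a n) sums E x"
    and mn: "\<exists>r'>0. \<forall>x. 0 < \<bar>x - d\<bar> \<and> \<bar>x - d\<bar> < r' \<longrightarrow> E d < E x"
  shows "\<exists>\<Phi>. \<Phi> holomorphic_on ball (of_real d) r \<and>
     (\<forall>x\<in>ball d r. complex_of_real (E x - E d) = (of_real x - of_real d)^2 * \<Phi> (of_real x))"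
proof -
  have serR: "(\<lambda>n. a n * h^n) sums E (d + h)" if "\<bar>h\<bar> < r" for h
  proof -
    have "d + h \<in> ball d r" using that by (simp add: dist_real_def)
    then have "(\<lambda>n. ((d + h - d)^n) *\<^sub>R a n) sums E (d + h)" using ser by blast
    then show ?thesis by (simp add: mult.commute)
  qed
  have S1: "summable (\<lambda>n. complex_of_real (a n) * z^n)" if "norm z < r" for z :: complex
  proof -
    define K where "K = (norm z + r) / 2"
    have nz: "0 \<le> norm z" by simp
    have K0: "K \<ge> 0" using nz r unfolding K_def by (simp add: field_simps)
    have K: "norm z < K" "\<bar>K\<bar> < r" using that K0 unfolding K_def by auto
    have "summable (\<lambda>n. a n * K^n)" using serR[OF K(2)] by (rule sums_summable)
    then have "summable (\<lambda>n. complex_of_real (a n * K^n))" by (rule summable_of_real)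
    then have "summable (\<lambda>n. complex_of_real (a n) * (complex_of_real K)^n)" by simp
    from powser_insidea[OF this, of z] K(1)
    have "summable (\<lambda>n. norm (complex_of_real (a n) * z^n))" by simp
    then show ?thesis by (rule summable_norm_cancel)
  qed
  define c where "c n = complex_of_real (a (n+2))" for n
  have S2: "summable (\<lambda>n. c n * z^n)" if "norm z < r" for z :: complex
  proof (cases "z = 0")
    case True then show ?thesis by (simp add: summable_0_powser)
  next
    case False
    have "summable (\<lambda>n. complex_of_real (a (n+2)) * z^(n+2))"
      using summable_ignore_initial_segment[OF S1[OF that], of 2] by simp
    then have X: "summable (\<lambda>n. complex_of_real (a (n+2)) * z^(n+2) / z^2)"
      by (rule summable_divide)
    have eqf: "(\<lambda>n. complex_of_real (a (n+2)) * z^(n+2) / z^2) = (\<lambda>n. c n * z^n)"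
      using False by (auto simp: c_def power_add power2_eq_square)
    from X show ?thesis unfolding eqf .
  qed
  define \<Phi> where "\<Phi> w = (\<Sum>n. c n * (w - complex_of_real d)^n)" for w
  have hol: "\<Phi> holomorphic_on ball (of_real d) r"
  proof (subst holomorphic_on_open, simp, intro ballI)
    fix w assume w: "w \<in> ball (complex_of_real d) r"
    then have nw: "norm (w - complex_of_real d) < r" by (simp add: dist_norm norm_minus_commute)
    have D1: "((\<lambda>z. \<Sum>n. c n * z^n) has_field_derivative (\<Sum>n. diffs c n * (w - complex_of_real d)^n)) (at (w - complex_of_real d))"
      by (rule termdiffs_strong'[OF S2]) (use nw in auto)
    have D2: "((\<lambda>w. w - complex_of_real d) has_field_derivative 1) (at w)"
      by (rule derivative_eq_intros | simp)+
    show "\<exists>f'. (\<Phi> has_field_derivative f') (at w)"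
      using DERIV_chain2[OF D1 D2] unfolding \<Phi>_def by blast
  qed
  have a0: "a 0 = E d"
  proof -
    have "(\<lambda>n. a n * 0^n) sums E d" using serR[of 0] r by simp
    then have "E d = (\<Sum>n. a n * 0^n)" by (rule sums_unique)
    then show ?thesis by (simp add: powser_zero)
  qed
  have a1: "a 1 = 0"
  proof -
    define P where "P h = (\<Sum>n. a n * h^n)" for h :: real
    have DP: "(P has_real_derivative (\<Sum>n. diffs a n * 0^n)) (at 0)"
      unfolding P_def
      by (rule termdiffs_strong'[of r]) (use serR r in \<open>auto intro: sums_summable\<close>)
    then have DP': "(P has_real_derivative a 1) (at 0)"
      by (simp add: powser_zero diffs_def)
    have D2: "((\<lambda>x. x - d) has_real_derivative 1) (at d)"
      by (rule derivative_eq_intros | simp)+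
    have DE0: "((\<lambda>x. P (x - d)) has_real_derivative a 1) (at d)"
      using DERIV_chain2[of P "a 1" "\<lambda>x. x - d" d 1] DP' D2 by simp
    have Eeq: "E x = P (x - d)" if "x \<in> ball d r" for x
    proof -
      have "\<bar>x - d\<bar> < r" using that by (simp add: dist_real_def abs_minus_commute)
      from serR[OF this] show ?thesis unfolding P_def by (simp add: sums_unique)
    qed
    have DE: "(E has_real_derivative a 1) (at d)"
      by (rule has_field_derivative_transform_within_open[OF DE0, of "ball d r"]) (use r Eeq in auto)
    obtain r' where r': "r' > 0" "\<forall>x. 0 < \<bar>x - d\<bar> \<and> \<bar>x - d\<bar> < r' \<longrightarrow> E d < E x"
      using mn by blast
    show ?thesis
    proof (rule DERIV_local_min[OF DE r'(1)], intro allI impI)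
      fix y assume "\<bar>d - y\<bar> < r'"
      then show "E d \<le> E y" using r'(2)[rule_format, of y]
        by (cases "y = d") (auto simp: abs_minus_commute)
    qed
  qed
  have ident: "complex_of_real (E x - E d) = (of_real x - of_real d)^2 * \<Phi> (of_real x)"
    if x: "x \<in> ball d r" for x
  proof -
    define h where "h = x - d"
    have hr: "\<bar>h\<bar> < r" using x by (simp add: h_def dist_real_def abs_minus_commute)
    have s0: "(\<lambda>n. a n * h^n) sums E x" using serR[OF hr] by (simp add: h_def)
    have s1: "(\<lambda>n. a (Suc (Suc n)) * h^(Suc (Suc n))) sums (E x - a 0 - a 1 * h)"
    proof -
      have "(\<lambda>n. a (Suc n) * h^(Suc n)) sums (E x - a 0)"
        using s0 sums_Suc_iff[of "\<lambda>n. a n * h^n" "E x - a 0"] by simp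
      then show ?thesis
        using sums_Suc_iff[of "\<lambda>n. a (Suc n) * h^(Suc n)" "E x - a 0 - a 1 * h"] by simp
    qed
    then have s2: "(\<lambda>n. complex_of_real (a (n+2) * h^(n+2))) sums complex_of_real (E x - E d)"
    proof -
      have "(\<lambda>n. a (n+2) * h^(n+2)) sums (E x - E d)" using s1 a0 a1 by simp
      then show ?thesis by (rule sums_of_real)
    qed
    have nh: "norm (complex_of_real h) < r" using hr by simp
    have s3: "(\<lambda>n. c n * (complex_of_real h)^n) sums \<Phi> (of_real x)"
      unfolding \<Phi>_def h_def using S2[OF nh] by (simp add: h_def summable_sums)
    have s4: "(\<lambda>n. (complex_of_real h)^2 * (c n * (complex_of_real h)^n)) sums ((complex_of_real h)^2 * \<Phi> (of_real x))"
      by (rule sums_mult[OF s3])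
    have "(\<lambda>n. (complex_of_real h)^2 * (c n * (complex_of_real h)^n)) = (\<lambda>n. complex_of_real (a (n+2) * h^(n+2)))"
      by (auto simp: c_def power_add power2_eq_square algebra_simps)
    with s4 s2 have "complex_of_real (E x - E d) = (complex_of_real h)^2 * \<Phi> (of_real x)"
      using sums_unique2 by metis
    then show ?thesis by (simp add: h_def)
  qed
  show ?thesis using hol ident by blast
qed



definition smooth_all :: "('a::real_normed_vector \<Rightarrow> 'b::real_normed_vector) \<Rightarrow> bool" where
  "smooth_all g \<longleftrightarrow> (\<exists>D::nat \<Rightarrow> 'a \<Rightarrow> 'a list \<Rightarrow> 'b. (\<forall>x. D 0 x [] = g x) \<and>
     (\<forall>j hs x. length hs = j \<longrightarrow> ((\<lambda>y. D j y hs) has_derivative (\<lambda>h. D (Suc j) x (h # hs))) (at x)))"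

fun splits :: "'a list \<Rightarrow> ('a list \<times> 'a list) list" where
  "splits [] = [([],[])]"
| "splits (h#hs) = map (\<lambda>p. (h # fst p, snd p)) (splits hs) @ map (\<lambda>p. (fst p, h # snd p)) (splits hs)"

lemma has_derivative_sum_list:
  assumes "\<forall>p\<in>set ps. (F p has_derivative F' p) (at x)"
  shows "((\<lambda>y. sum_list (map (\<lambda>p. F p y) ps)) has_derivative (\<lambda>h. sum_list (map (\<lambda>p. F' p h) ps))) (at x)"
  using assms
proof (induction ps)
  case Nil then show ?case by (simp add: has_derivative_const)
next
  case (Cons p ps)
  then show ?case by (auto intro: has_derivative_add)
qed

lemma smooth_const: "smooth_all (\<lambda>x. c)"
  unfolding smooth_all_def
  by (rule exI[of _ "\<lambda>j x hs. if j = 0 then c else 0"]) (auto intro: has_derivative_const)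

lemma smooth_linear: assumes "bounded_linear L" shows "smooth_all L"
  unfolding smooth_all_def
proof (rule exI[of _ "\<lambda>j x hs. if j = 0 then L x else if j = 1 then L (hd hs) else 0"], intro conjI allI impI)
  fix j :: nat and hs :: "'a list" and x assume "length hs = j"
  show "((\<lambda>y. if j = 0 then L y else if j = 1 then L (hd hs) else 0) has_derivative
          (\<lambda>h. if Suc j = 0 then L x else if Suc j = 1 then L (hd (h # hs)) else 0)) (at x)"
    using bounded_linear_imp_has_derivative[OF assms]
    by (cases "j = 0"; cases "j = 1") (auto intro: has_derivative_const)
qed simp

lemma smooth_add: assumes "smooth_all f" "smooth_all g" shows "smooth_all (\<lambda>x. f x + g x)"
proof -
  obtain D1 where D1: "\<forall>x. D1 0 x [] = f x" "\<forall>j hs x. length hs = j \<longrightarrow> ((\<lambda>y. D1 j y hs) has_derivative (\<lambda>h. D1 (Suc j) x (h # hs))) (at x)"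
    using assms(1) unfolding smooth_all_def by blast
  obtain D2 where D2: "\<forall>x. D2 0 x [] = g x" "\<forall>j hs x. length hs = j \<longrightarrow> ((\<lambda>y. D2 j y hs) has_derivative (\<lambda>h. D2 (Suc j) x (h # hs))) (at x)"
    using assms(2) unfolding smooth_all_def by blast
  show ?thesis unfolding smooth_all_def
    by (rule exI[of _ "\<lambda>j x hs. D1 j x hs + D2 j x hs"]) (use D1 D2 in \<open>auto intro: has_derivative_add\<close>)
qed

lemma smooth_scaleR:
  fixes f :: "'a::real_normed_vector \<Rightarrow> real" and g :: "'a \<Rightarrow> 'b::real_normed_vector"
  assumes "smooth_all f" "smooth_all g" shows "smooth_all (\<lambda>x. f x *\<^sub>R g x)"
proof -
  obtain D1 where D1: "\<forall>x. D1 0 x [] = f x" "\<forall>j hs x. length hs = j \<longrightarrow> ((\<lambda>y. D1 j y hs) has_derivative (\<lambda>h. D1 (Suc j) x (h # hs))) (at x)"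
    using assms(1) unfolding smooth_all_def by blast
  obtain D2 where D2: "\<forall>x. D2 0 x [] = g x" "\<forall>j hs x. length hs = j \<longrightarrow> ((\<lambda>y. D2 j y hs) has_derivative (\<lambda>h. D2 (Suc j) x (h # hs))) (at x)"
    using assms(2) unfolding smooth_all_def by blast
  define F where "F p y = D1 (length (fst p)) y (fst p) *\<^sub>R D2 (length (snd p)) y (snd p)"
    for p :: "'a list \<times> 'a list" and y
  define D where "D j x hs = sum_list (map (\<lambda>p. F p x) (splits hs))"
    for j :: nat and x and hs :: "'a list"
  have "((\<lambda>y. D j y hs) has_derivative (\<lambda>h. D (Suc j) x (h # hs))) (at x)" for j hs x
  proof -
    define F' where "F' p h = D1 (length (fst p)) x (fst p) *\<^sub>R D2 (Suc (length (snd p))) x (h # snd p)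
            + D1 (Suc (length (fst p))) x (h # fst p) *\<^sub>R D2 (length (snd p)) x (snd p)"
      for p :: "'a list \<times> 'a list" and h
    have "((\<lambda>y. sum_list (map (\<lambda>p. F p y) (splits hs)))
       has_derivative (\<lambda>h. sum_list (map (\<lambda>p. F' p h) (splits hs)))) (at x)"
      by (rule has_derivative_sum_list) (use D1(2) D2(2) in \<open>auto simp: F_def F'_def intro!: has_derivative_scaleR\<close>)
    moreover have "(\<lambda>h. sum_list (map (\<lambda>p. F' p h) (splits hs))) = (\<lambda>h. D (Suc j) x (h # hs))"
      by (rule ext) (simp add: D_def F_def F'_def o_def sum_list_addf add.commute)
    ultimately show ?thesis by (simp add: D_def)
  qed
  moreover have "\<forall>x. D 0 x [] = f x *\<^sub>R g x" using D1(1) D2(1) by (simp add: D_def F_def)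
  ultimately show ?thesis unfolding smooth_all_def by blast
qed

lemma smooth_sum:
  assumes "finite A" "\<forall>j\<in>A. smooth_all (g j)"
  shows "smooth_all (\<lambda>x. \<Sum>j\<in>A. g j x)"
  using assms
proof (induction A rule: finite_induct)
  case empty then show ?case by (simp add: smooth_const)
next
  case (insert a A) then show ?case by (simp add: smooth_add)
qed

lemma smooth_power:
  fixes f :: "'a::real_normed_vector \<Rightarrow> real"
  assumes "smooth_all f" shows "smooth_all (\<lambda>x. f x ^ n)"
proof (induction n)
  case 0 then show ?case by (simp add: smooth_const)
next
  case (Suc n)
  then show ?case using smooth_scaleR[OF assms Suc] by simp
qed

lemma smooth_Ck:
  fixes g :: "'a::euclidean_space \<Rightarrow> 'b::real_normed_vector"
  assumes "smooth_all g" shows "Ck_on m UNIV g"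
proof -
  obtain D where D: "\<forall>x. D 0 x [] = g x" "\<forall>j hs x. length hs = j \<longrightarrow> ((\<lambda>y. D j y hs) has_derivative (\<lambda>h. D (Suc j) x (h # hs))) (at x)"
    using assms unfolding smooth_all_def by blast
  have "continuous_on UNIV (\<lambda>y. D j y hs)" if "length hs = j" for j hs
    using D(2) that by (auto intro!: continuous_at_imp_continuous_on has_derivative_continuous)
  then show ?thesis unfolding Ck_on_def using D by blast
qed



lemma analytic_monomial: "real_analytic_on S (\<lambda>t. (t^n) *\<^sub>R (v::'a::real_normed_vector))"
  unfolding real_analytic_on_def
proof
  fix x :: real assume "x \<in> S"
  have "\<forall>y\<in>ball x 1. (\<lambda>m. (y - x)^m *\<^sub>R (if m \<le> n then (of_nat (n choose m) * x^(n-m)) *\<^sub>R v else 0)) sums ((y^n) *\<^sub>R v)"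
  proof
    fix y :: real
    have "(\<lambda>m. (y - x)^m *\<^sub>R (if m \<le> n then (of_nat (n choose m) * x^(n-m)) *\<^sub>R v else 0)) sums
        (\<Sum>m\<in>{..n}. (y - x)^m *\<^sub>R (if m \<le> n then (of_nat (n choose m) * x^(n-m)) *\<^sub>R v else 0))"
      by (rule sums_finite) auto
    also have "(\<Sum>m\<in>{..n}. (y - x)^m *\<^sub>R (if m \<le> n then (of_nat (n choose m) * x^(n-m)) *\<^sub>R v else 0))
        = (\<Sum>m\<in>{..n}. of_nat (n choose m) * (y - x)^m * x^(n-m)) *\<^sub>R v"
      by (simp add: scaleR_sum_left algebra_simps)
    also have "(\<Sum>m\<in>{..n}. of_nat (n choose m) * (y - x)^m * x^(n-m)) = ((y - x) + x)^n"
      by (rule binomial_ring[symmetric])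
    finally show "(\<lambda>m. (y - x)^m *\<^sub>R (if m \<le> n then (of_nat (n choose m) * x^(n-m)) *\<^sub>R v else 0)) sums ((y^n) *\<^sub>R v)"
      by simp
  qed
  then show "\<exists>r>0. \<exists>a. \<forall>y\<in>ball x r. (\<lambda>m. (y - x)^m *\<^sub>R a m) sums ((y^n) *\<^sub>R v)"
    by (intro exI[of _ 1] conjI exI[of _ "\<lambda>m. if m \<le> n then (of_nat (n choose m) * x^(n-m)) *\<^sub>R v else 0"]) simp_all
qed

lemma analytic_add:
  assumes "real_analytic_on S f" "real_analytic_on S g"
  shows "real_analytic_on S (\<lambda>t. f t + g t)"
  unfolding real_analytic_on_def
proof
  fix x assume x: "x \<in> S"
  obtain r1 a1 where 1: "r1 > 0" "\<forall>y\<in>ball x r1. (\<lambda>n. ((y - x)^n) *\<^sub>R a1 n) sums f y"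
    using assms(1) x unfolding real_analytic_on_def by blast
  obtain r2 a2 where 2: "r2 > 0" "\<forall>y\<in>ball x r2. (\<lambda>n. ((y - x)^n) *\<^sub>R a2 n) sums g y"
    using assms(2) x unfolding real_analytic_on_def by blast
  show "\<exists>r>0. \<exists>a. \<forall>y\<in>ball x r. (\<lambda>n. (y - x) ^ n *\<^sub>R a n) sums (f y + g y)"
  proof (intro exI conjI ballI)
    show "0 < min r1 r2" using 1 2 by simp
    fix y assume "y \<in> ball x (min r1 r2)"
    then have "(\<lambda>n. ((y - x)^n) *\<^sub>R a1 n + ((y - x)^n) *\<^sub>R a2 n) sums (f y + g y)"
      using 1 2 by (intro sums_add) auto
    then show "(\<lambda>n. (y - x) ^ n *\<^sub>R (a1 n + a2 n)) sums (f y + g y)"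
      by (simp add: scaleR_right_distrib)
  qed
qed

lemma analytic_zero: "real_analytic_on S (\<lambda>t. 0::'a::real_normed_vector)"
  unfolding real_analytic_on_def
  by (intro ballI exI[of _ 1] conjI exI[of _ "\<lambda>n. 0"]) auto

lemma analytic_sum:
  assumes "finite A" "\<forall>j\<in>A. real_analytic_on S (g j)"
  shows "real_analytic_on S (\<lambda>t. \<Sum>j\<in>A. g j t)"
  using assms
proof (induction A rule: finite_induct)
  case empty then show ?case by (simp add: analytic_zero)
next
  case (insert a A) then show ?case by (simp add: analytic_add)
qed




lemma pinned_subspace:
  fixes vert :: "nat \<Rightarrow> 'n::finite" and ax :: "nat \<Rightarrow> 'd::finite"
  shows "subspace (pinned_space vert ax l)"
  unfolding subspace_def pinned_space_def pinned_pos_def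
  by (auto intro: span_add span_scale span_zero)

lemma Kspace_subspace:
  fixes vert :: "nat \<Rightarrow> 'n::finite" and ax :: "nat \<Rightarrow> 'd::finite"
  shows "subspace (Kspace vert ax l Edges p)"
proof -
  have s: "subspace (pinned_space vert ax l)" by (rule pinned_subspace)
  have d1: "(x + y) $ i - (x + y) $ j = (x $ i - x $ j) + (y $ i - y $ j)" for x y :: "real^'d^'n" and i j
    by simp
  have d2: "(c *\<^sub>R x) $ i - (c *\<^sub>R x) $ j = c *\<^sub>R (x $ i - x $ j)" for x :: "real^'d^'n" and c i j
    by (simp add: scaleR_diff_right)
  have d3: "(0::real^'d^'n) $ i - 0 $ j = 0" for i j by simp
  show ?thesis
    unfolding subspace_def Kspace_def mem_Collect_eq
    using subspace_0[OF s] subspace_add[OF s] subspace_scale[OF s]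
    by (simp only: d1 d2 d3 inner_add_right inner_scaleR_right inner_zero_right) simp
qed

lemma dim1_span:
  fixes K :: "'a::euclidean_space set"
  assumes "subspace K" "dim K = 1" "v \<in> K" "v \<noteq> 0"
  shows "K \<subseteq> span {v}"
proof
  fix w assume w: "w \<in> K"
  show "w \<in> span {v}"
  proof (rule ccontr)
    assume nw: "w \<notin> span {v}"
    have iv: "independent {v}"
      using independent_insertI[of v "{}"] assms(4) by simp
    have ind: "independent (insert w {v})"
      by (rule independent_insertI[OF nw iv])
    have "w \<noteq> v" using nw span_base[of v "{v}"] by auto
    then have "card (insert w {v}) = 2" by simp
    moreover have "card (insert w {v}) \<le> dim K"
      by (rule independent_card_le_dim) (use w assms(3) ind in auto)
    ultimately show False using assms(2) by simp
  qed
qed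


lemma functional_exists:
  fixes Kb :: "'a::euclidean_space set"
  assumes "subspace Kb" "v \<notin> Kb"
  shows "\<exists>g. linear g \<and> g v = (1::real) \<and> (\<forall>b\<in>Kb. g b = 0)"
proof -
  obtain B where B: "B \<subseteq> Kb" "independent B" "Kb \<subseteq> span B"
    by (rule basis_exists[of Kb])
  have sB: "span B \<subseteq> Kb" using span_minimal[OF B(1) assms(1)] .
  have vB: "v \<notin> span B" using sB assms(2) by (rule contra_subsetD)
  have vB': "v \<notin> B" using vB span_base by metis
  have ind: "independent (insert v B)" by (rule independent_insertI[OF vB B(2)])
  obtain g where g: "linear g" "\<And>x. x \<in> insert v B \<Longrightarrow> g x = (if x = v then (1::real) else 0)"
    using linear_independent_extend[OF ind, of "\<lambda>x. if x = v then (1::real) else 0"] by metis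
  have gv: "g v = 1" using g(2)[of v] by simp
  have g0: "g x = 0" if "x \<in> B" for x using g(2)[of x] that vB' by auto
  have "\<forall>b\<in>Kb. g b = 0"
  proof
    fix b assume "b \<in> Kb"
    then have "b \<in> span B" using B(3) by blast
    then show "g b = 0"
      by (rule linear_eq_0_on_span[OF g(1) g0, rotated])
  qed
  then show ?thesis using g(1) gv by blast
qed



definition Ncf :: "real^'d^'n \<Rightarrow> (nat \<Rightarrow> real^'d^'n) \<Rightarrow> nat \<Rightarrow> 'n \<times> 'n \<Rightarrow> complex \<Rightarrow> complex" where
  "Ncf p pp k e u = (\<Sum>i\<in>UNIV. (complex_of_real (p $ fst e $ i - p $ snd e $ i) +
      (\<Sum>j=1..k-1. u^j * complex_of_real (pp j $ fst e $ i - pp j $ snd e $ i)))^2)"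

lemma sq_norm_vec: "norm (x::real^'d)^2 = (\<Sum>i\<in>UNIV. (x $ i)^2)"
  unfolding power2_norm_eq_inner inner_vec_def by (simp add: power2_eq_square)

lemma edge_comp:
  fixes p :: "real^'d^'n" and pp :: "nat \<Rightarrow> real^'d^'n"
  shows "(p + (\<Sum>j\<in>J. c j *\<^sub>R pp j)) $ a $ i - (p + (\<Sum>j\<in>J. c j *\<^sub>R pp j)) $ b $ i
     = (p $ a $ i - p $ b $ i) + (\<Sum>j\<in>J. c j * (pp j $ a $ i - pp j $ b $ i))"
  by (simp add: sum_subtractf algebra_simps)

lemma Ncf_real: "Ncf p pp k e (of_real t) = of_real (meas (p + (\<Sum>j=1..k-1. t^j *\<^sub>R pp j)) e)"
proof -
  have "meas (p + (\<Sum>j=1..k-1. t^j *\<^sub>R pp j)) e =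
     (\<Sum>i\<in>UNIV. ((p $ fst e $ i - p $ snd e $ i) + (\<Sum>j=1..k-1. t^j * (pp j $ fst e $ i - pp j $ snd e $ i)))^2)"
    unfolding meas_def sq_norm_vec by (simp only: vector_minus_component edge_comp)
  then show ?thesis unfolding Ncf_def by simp
qed

lemma Ncf_hol: "Ncf p pp k e holomorphic_on A"
  unfolding Ncf_def[abs_def] by (intro holomorphic_intros)

lemma Ncf_vanish:
  assumes "k_vanishing (k-1) (\<lambda>t. meas (p + (\<Sum>j=1..k-1. t^j *\<^sub>R pp j)) e)" "i \<in> {1..k-1}"
  shows "(deriv ^^ i) (Ncf p pp k e) 0 = 0"
proof -
  let ?\<phi> = "\<lambda>t. meas (p + (\<Sum>j=1..k-1. t^j *\<^sub>R pp j)) e"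
  have hol: "Ncf p pp k e holomorphic_on ball 0 1" by (rule Ncf_hol)
  have "(vderiv ^^ i) ?\<phi> 0 = Re ((deriv ^^ i) (Ncf p pp k e) (of_real 0))"
    by (rule real_restrict_deriv[OF hol]) (simp_all add: Ncf_real)
  moreover have "(vderiv ^^ i) ?\<phi> 0 = 0" using assms unfolding k_vanishing_def by blast
  ultimately have re: "Re ((deriv ^^ i) (Ncf p pp k e) 0) = 0" by simp
  have hol2: "(\<lambda>w. - \<i> * Ncf p pp k e w) holomorphic_on ball 0 1" by (intro holomorphic_intros hol)
  have X: "(vderiv ^^ i) (\<lambda>t::real. 0::real) 0 = Re ((deriv ^^ i) (\<lambda>w. - \<i> * Ncf p pp k e w) (of_real 0))"
    by (rule real_restrict_deriv[OF hol2]) (simp_all add: Ncf_real)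
  have Y: "(deriv ^^ i) (\<lambda>w. - \<i> * Ncf p pp k e w) 0 = - \<i> * (deriv ^^ i) (Ncf p pp k e) 0"
    by (rule higher_deriv_cmult[OF hol]) auto
  have im: "Im ((deriv ^^ i) (Ncf p pp k e) 0) = 0" using X Y by (simp add: vderiv_zero)
  show ?thesis using re im by (simp add: complex_eq_iff)
qed

lemma Ncf_deriv1:
  assumes "k \<ge> 2"
  shows "deriv (Ncf p pp k e) 0 = (\<Sum>i\<in>UNIV. 2 * complex_of_real (p $ fst e $ i - p $ snd e $ i) *
              complex_of_real (pp 1 $ fst e $ i - pp 1 $ snd e $ i))"
proof -
  define A where "A i = complex_of_real (p $ fst e $ i - p $ snd e $ i)" for i
  define B where "B j i = complex_of_real (pp j $ fst e $ i - pp j $ snd e $ i)" for j i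
  have D: "(Ncf p pp k e has_field_derivative
     (\<Sum>i\<in>UNIV. 2 * (A i + (\<Sum>j=1..k-1. 0^j * B j i)) * (\<Sum>j=1..k-1. of_nat j * 0^(j-1) * B j i))) (at 0)"
    unfolding Ncf_def[abs_def] A_def[symmetric] B_def[symmetric]
    by (rule derivative_eq_intros refl | simp add: algebra_simps sum.distrib)+
  have s1: "(\<Sum>j=1..k-1. (0::complex)^j * B j i) = 0" for i
    by (rule sum.neutral) auto
  have s2: "(\<Sum>j=1..k-1. of_nat j * (0::complex)^(j-1) * B j i) = B 1 i" for i
  proof -
    have "(\<Sum>j=1..k-1. of_nat j * (0::complex)^(j-1) * B j i) = (\<Sum>j=1..k-1. if j = 1 then B j i else 0)"
      by (rule sum.cong) auto
    also have "\<dots> = B 1 i" using assms by simp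
    finally show ?thesis .
  qed
  show ?thesis using DERIV_imp_deriv[OF D] unfolding s1 s2 by (simp add: A_def B_def)
qed




lemma I4_part:
  fixes p :: "real^'d^'n" and pp :: "nat \<Rightarrow> real^'d^'n" and Q :: "real^'d^'n" and y :: real
    and Edges :: "('n \<times> 'n) set" and Ee :: "'n \<times> 'n \<Rightarrow> real \<Rightarrow> real" and k :: nat
  assumes sbe: "stiff_bar_energy Edges p Ee" and k2: "k \<ge> 2"
    and van: "\<forall>e\<in>Edges. \<forall>i\<in>{1..k-1}. (deriv ^^ i) (Ncf p pp k e) 0 = 0"
    and y1: "\<bar>y\<bar> \<le> 1" and i: "i < 2*k"
  shows "(vderiv ^^ i) (\<lambda>t. energy Edges Ee (p + ((\<Sum>j=1..k-1. (y^j * t^j) *\<^sub>R pp j) + t^k *\<^sub>R Q))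
            - energy Edges Ee p) 0 = 0"
proof -
  have finE: "finite Edges" by (rule finite_subset[OF subset_UNIV]) simp
  define d where "d e = norm (p $ fst e - p $ snd e)" for e
  have dpos: "d e > 0" if "e \<in> Edges" for e
    using sbe that unfolding stiff_bar_energy_def Let_def d_def by auto
  define Pr where "Pr e r \<Phi> \<longleftrightarrow> r > 0 \<and> \<Phi> holomorphic_on ball (of_real (d e)) r \<and>
     (\<forall>x\<in>ball (d e) r. complex_of_real (Ee e x - Ee e (d e)) = (of_real x - of_real (d e))^2 * \<Phi> (of_real x))"
    for e r \<Phi>
  have loc: "\<exists>r \<Phi>. Pr e r \<Phi>" if e: "e \<in> Edges" for e
  proof -
    have sb: "real_analytic_on {d e} (Ee e)"
      "\<exists>r>0. \<forall>x. 0 < \<bar>x - d e\<bar> \<and> \<bar>x - d e\<bar> < r \<longrightarrow> Ee e (d e) < Ee e x"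
      using sbe e unfolding stiff_bar_energy_def Let_def d_def by auto
    obtain r a where ra: "r > 0" "\<forall>x\<in>ball (d e) r. (\<lambda>n. ((x - d e)^n) *\<^sub>R a n) sums Ee e x"
      using sb(1) unfolding real_analytic_on_def by auto
    from energy_local[OF ra sb(2)] ra(1) show ?thesis unfolding Pr_def by blast
  qed
  have "\<exists>rr. \<forall>e\<in>Edges. \<exists>\<Phi>. Pr e (rr e) \<Phi>" by (rule bchoice) (use loc in blast)
  then obtain rr where rr: "\<forall>e\<in>Edges. \<exists>\<Phi>. Pr e (rr e) \<Phi>" by (elim exE)
  have "\<exists>PP. \<forall>e\<in>Edges. Pr e (rr e) (PP e)" by (rule bchoice[OF rr])
  then obtain PP where PP0: "\<forall>e\<in>Edges. Pr e (rr e) (PP e)" by (elim exE)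
  have rrpos: "rr e > 0" and PPhol: "PP e holomorphic_on ball (of_real (d e)) (rr e)"
    and PPid: "\<And>x. x \<in> ball (d e) (rr e) \<Longrightarrow> complex_of_real (Ee e x - Ee e (d e)) = (of_real x - of_real (d e))^2 * PP e (of_real x)"
    if "e \<in> Edges" for e
    using PP0 that unfolding Pr_def by auto
  have fac: "\<exists>\<mu>. \<mu> holomorphic_on ball 0 1 \<and> (\<forall>u\<in>ball 0 1. Ncf p pp k e u - Ncf p pp k e 0 = u^k * \<mu> u)"
    if e: "e \<in> Edges" for e
  proof (rule factor_zero)
    show "(\<lambda>u. Ncf p pp k e u - Ncf p pp k e 0) holomorphic_on ball 0 1"
      by (intro holomorphic_intros Ncf_hol)
    show "\<forall>i<k. (deriv ^^ i) (\<lambda>u. Ncf p pp k e u - Ncf p pp k e 0) 0 = 0"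
    proof (intro allI impI)
      fix i assume "i < k"
      show "(deriv ^^ i) (\<lambda>u. Ncf p pp k e u - Ncf p pp k e 0) 0 = 0"
      proof (cases "i = 0")
        case True then show ?thesis by simp
      next
        case False
        have "(deriv ^^ i) (\<lambda>u. Ncf p pp k e u - Ncf p pp k e 0) 0 =
              (deriv ^^ i) (Ncf p pp k e) 0 - (deriv ^^ i) (\<lambda>u. Ncf p pp k e 0) 0"
          by (rule higher_deriv_diff[of _ UNIV]) (auto intro: Ncf_hol)
        also have "\<dots> = 0" using van e False \<open>i < k\<close> by simp
        finally show ?thesis .
      qed
    qed
  qed simp
  have "\<exists>\<mu>. \<forall>e\<in>Edges. \<mu> e holomorphic_on ball 0 1 \<and>
     (\<forall>u\<in>ball 0 1. Ncf p pp k e u - Ncf p pp k e 0 = u^k * \<mu> e u)"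
    by (rule bchoice) (use fac in blast)
  then obtain \<mu> where \<mu>: "\<forall>e\<in>Edges. \<mu> e holomorphic_on ball 0 1 \<and>
     (\<forall>u\<in>ball 0 1. Ncf p pp k e u - Ncf p pp k e 0 = u^k * \<mu> e u)"
    by (elim exE)
  have N0: "Ncf p pp k e 0 = of_real ((d e)^2)" for e
  proof -
    have s0: "(\<Sum>j=1..k-1. (0::complex)^j * c j) = 0" for c :: "nat \<Rightarrow> complex"
      by (rule sum.neutral) auto
    show ?thesis unfolding Ncf_def s0 d_def sq_norm_vec by simp
  qed
  define A where "A e i = p $ fst e $ i - p $ snd e $ i" for e i
  define B where "B e j i = pp j $ fst e $ i - pp j $ snd e $ i" for e j i
  define C where "C e i = Q $ fst e $ i - Q $ snd e $ i" for e i
  define ac where "ac e i t = complex_of_real (A e i) + (\<Sum>j=1..k-1. (of_real y * t)^j * of_real (B e j i))"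
    for e i and t :: complex
  define Mc where "Mc e t = (\<Sum>i\<in>UNIV. (ac e i t + t^k * of_real (C e i))^2)" for e and t :: complex
  define \<nu> where "\<nu> e t = of_real y ^ k * \<mu> e (of_real y * t) +
      (\<Sum>i\<in>UNIV. of_real (C e i) * (2 * ac e i t + t^k * of_real (C e i)))" for e and t :: complex
  have ID1: "Mc e t - of_real ((d e)^2) = t^k * \<nu> e t" if e: "e \<in> Edges" and t: "t \<in> ball 0 1" for e t
  proof -
    have Nc: "Ncf p pp k e (of_real y * t) = (\<Sum>i\<in>UNIV. (ac e i t)^2)"
      unfolding Ncf_def ac_def A_def B_def by simp
    have yt: "of_real y * t \<in> ball 0 1"
    proof -
      have "norm (of_real y * t) = \<bar>y\<bar> * norm t" by (simp add: norm_mult)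
      also have "\<dots> \<le> norm t" using y1 by (simp add: mult_left_le_one_le)
      also have "\<dots> < 1" using t by simp
      finally show ?thesis by simp
    qed
    have fy: "Ncf p pp k e (of_real y * t) - of_real ((d e)^2) = (of_real y * t)^k * \<mu> e (of_real y * t)"
      using \<mu> e yt N0[of e] by auto
    have sq: "(a + b)^2 = a^2 + b * (2 * a + b)" for a b :: complex by (simp add: power2_eq_square algebra_simps)
    have "Mc e t = (\<Sum>i\<in>UNIV. (ac e i t)^2) + t^k * (\<Sum>i\<in>UNIV. of_real (C e i) * (2 * ac e i t + t^k * of_real (C e i)))"
      unfolding Mc_def sq by (simp add: sum.distrib sum_distrib_left algebra_simps)
    then show ?thesis using fy Nc unfolding \<nu>_def by (simp add: power_mult_distrib algebra_simps)
  qed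
  have comp: "(p + ((\<Sum>j=1..k-1. (y^j * x^j) *\<^sub>R pp j) + x^k *\<^sub>R Q)) $ fst e $ i
       - (p + ((\<Sum>j=1..k-1. (y^j * x^j) *\<^sub>R pp j) + x^k *\<^sub>R Q)) $ snd e $ i
     = A e i + (\<Sum>j=1..k-1. (y * x)^j * B e j i) + x^k * C e i" for e i and x :: real
    unfolding A_def B_def C_def by (simp add: sum_subtractf algebra_simps power_mult_distrib)
  have RI: "Mc e (of_real x) = of_real ((norm ((p + ((\<Sum>j=1..k-1. (y^j * x^j) *\<^sub>R pp j) + x^k *\<^sub>R Q)) $ fst e
       - (p + ((\<Sum>j=1..k-1. (y^j * x^j) *\<^sub>R pp j) + x^k *\<^sub>R Q)) $ snd e))^2)" for e and x :: real
    unfolding sq_norm_vec vector_minus_component comp Mc_def ac_def by simp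
  have Mc0: "Mc e 0 = of_real ((d e)^2)" if e: "e \<in> Edges" for e
  proof -
    have "Mc e 0 - of_real ((d e)^2) = 0" using ID1[OF e, of 0] k2 by (simp add: power_0_left)
    then show ?thesis by simp
  qed
  have Mchol: "Mc e holomorphic_on UNIV" for e
    unfolding Mc_def[abs_def] ac_def by (intro holomorphic_intros)
  have cont: "\<exists>\<delta>>0. \<forall>t. norm t < \<delta> \<longrightarrow> norm (Mc e t - of_real ((d e)^2)) < (d e)^2 \<and>
        norm (csqrt (Mc e t) - of_real (d e)) < min (rr e) (d e)" if e: "e \<in> Edges" for e
  proof -
    have c1: "isCont (Mc e) 0"
      using holomorphic_on_imp_continuous_on[OF Mchol[of e]] continuous_on_eq_continuous_at[OF open_UNIV] by blast
    have nn: "Mc e 0 \<notin> \<real>\<^sub>\<le>\<^sub>0" using Mc0[OF e] dpos[OF e] by (simp add: complex_nonpos_Reals_iff)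
    have c2: "isCont (\<lambda>t. csqrt (Mc e t)) 0" by (rule isCont_csqrt'[OF c1 nn])
    have cs0: "csqrt (Mc e 0) = of_real (d e)"
      using Mc0[OF e] dpos[OF e] by (simp add: csqrt_of_real)
    obtain \<delta>1 where d1: "\<delta>1 > 0" "\<forall>x'. dist x' 0 < \<delta>1 \<longrightarrow> dist (Mc e x') (Mc e 0) < (d e)^2"
      using c1 dpos[OF e] unfolding continuous_at_eps_delta by (meson zero_less_power)
    obtain \<delta>2 where d2: "\<delta>2 > 0" "\<forall>x'. dist x' 0 < \<delta>2 \<longrightarrow> dist (csqrt (Mc e x')) (csqrt (Mc e 0)) < min (rr e) (d e)"
      using c2 dpos[OF e] rrpos[OF e] unfolding continuous_at_eps_delta by (meson min_less_iff_conj)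
    show ?thesis
      by (rule exI[of _ "min \<delta>1 \<delta>2"]) (use d1 d2 Mc0[OF e] cs0 in \<open>auto simp: dist_norm\<close>)
  qed
  have "\<exists>\<delta>f. \<forall>e\<in>Edges. \<delta>f e > 0 \<and> (\<forall>t. norm t < \<delta>f e \<longrightarrow> norm (Mc e t - of_real ((d e)^2)) < (d e)^2 \<and>
        norm (csqrt (Mc e t) - of_real (d e)) < min (rr e) (d e))"
    by (rule bchoice) (use cont in blast)
  then obtain \<delta>f where \<delta>f: "\<forall>e\<in>Edges. \<delta>f e > 0 \<and> (\<forall>t. norm t < \<delta>f e \<longrightarrow> norm (Mc e t - of_real ((d e)^2)) < (d e)^2 \<and>
        norm (csqrt (Mc e t) - of_real (d e)) < min (rr e) (d e))"
    by (elim exE)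
  define \<rho> where "\<rho> = Min (insert 1 (\<delta>f ` Edges))"
  have \<rho>pos: "\<rho> > 0" unfolding \<rho>_def using finE \<delta>f by (subst Min_gr_iff) auto
  have \<rho>1: "\<rho> \<le> 1" unfolding \<rho>_def using finE by (intro Min_le) auto
  have \<rho>e: "\<rho> \<le> \<delta>f e" if "e \<in> Edges" for e unfolding \<rho>_def using finE that by (intro Min_le) auto
  have P1: "norm (Mc e t - of_real ((d e)^2)) < (d e)^2" and P2: "norm (csqrt (Mc e t) - of_real (d e)) < min (rr e) (d e)"
    if "e \<in> Edges" "t \<in> ball 0 \<rho>" for e t
    using \<delta>f that \<rho>e[OF that(1)] by auto
  have nonpos: "Mc e t \<notin> \<real>\<^sub>\<le>\<^sub>0" if "e \<in> Edges" "t \<in> ball 0 \<rho>" for e t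
  proof -
    have "\<bar>Re (Mc e t - of_real ((d e)^2))\<bar> < (d e)^2" using le_less_trans[OF abs_Re_le_cmod P1[OF that]] .
    then have "Re (Mc e t) > 0" by simp
    then show ?thesis by (simp add: complex_nonpos_Reals_iff)
  qed
  have denom: "csqrt (Mc e t) + of_real (d e) \<noteq> 0" if "e \<in> Edges" "t \<in> ball 0 \<rho>" for e t
  proof
    assume "csqrt (Mc e t) + of_real (d e) = 0"
    then have "csqrt (Mc e t) = - of_real (d e)" by (simp add: eq_neg_iff_add_eq_0)
    then have "csqrt (Mc e t) - of_real (d e) = - 2 * of_real (d e)" by simp
    then have "norm (csqrt (Mc e t) - of_real (d e)) = norm (- 2 * complex_of_real (d e))" by (simp only:)
    also have "\<dots> = 2 * d e" using dpos[OF that(1)] by (simp add: norm_mult)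
    finally have "norm (csqrt (Mc e t) - of_real (d e)) = 2 * d e" .
    then show False using P2[OF that] dpos[OF that(1)] by simp
  qed
  have inball: "csqrt (Mc e t) \<in> ball (of_real (d e)) (rr e)" if "e \<in> Edges" "t \<in> ball 0 \<rho>" for e t
    using P2[OF that] by (simp add: dist_norm norm_minus_commute)
  define H where "H t = (\<Sum>e\<in>Edges. (\<nu> e t)^2 / (csqrt (Mc e t) + of_real (d e))^2 * PP e (csqrt (Mc e t)))" for t
  have termhol: "(\<lambda>t. (\<nu> e t)^2 / (csqrt (Mc e t) + of_real (d e))^2 * PP e (csqrt (Mc e t))) holomorphic_on ball 0 \<rho>"
    if e: "e \<in> Edges" for e
  proof -
    have muh: "(\<lambda>t. \<mu> e (of_real y * t)) holomorphic_on ball 0 \<rho>"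
    proof -
      have "(\<mu> e \<circ> (\<lambda>t. of_real y * t)) holomorphic_on ball 0 \<rho>"
      proof (rule holomorphic_on_compose_gen)
        show "(\<lambda>t. of_real y * t) holomorphic_on ball 0 \<rho>" by (intro holomorphic_intros)
        show "\<mu> e holomorphic_on ball 0 1" using \<mu> e by blast
        show "(\<lambda>t. complex_of_real y * t) ` ball 0 \<rho> \<subseteq> ball 0 1"
        proof
          fix w assume "w \<in> (\<lambda>t. complex_of_real y * t) ` ball 0 \<rho>"
          then obtain t where t: "t \<in> ball 0 \<rho>" "w = of_real y * t" by blast
          have "norm w = \<bar>y\<bar> * norm t" using t(2) by (simp add: norm_mult)
          also have "\<dots> \<le> norm t" using y1 by (simp add: mult_left_le_one_le)
          also have "\<dots> < 1" using t(1) \<rho>1 by simp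
          finally show "w \<in> ball 0 1" by simp
        qed
      qed
      then show ?thesis by (simp add: o_def)
    qed
    have nuh: "\<nu> e holomorphic_on ball 0 \<rho>"
      unfolding \<nu>_def[abs_def] ac_def by (intro holomorphic_intros muh)
    have cshol: "(\<lambda>t. csqrt (Mc e t)) holomorphic_on ball 0 \<rho>"
      by (rule holomorphic_on_csqrt') (use holomorphic_on_subset[OF Mchol[of e]] nonpos[OF e] in auto)
    have pph0: "(PP e \<circ> (\<lambda>t. csqrt (Mc e t))) holomorphic_on ball 0 \<rho>"
      by (rule holomorphic_on_compose_gen[OF cshol PPhol[OF e]]) (use inball[OF e] in auto)
    have pph: "(\<lambda>t. PP e (csqrt (Mc e t))) holomorphic_on ball 0 \<rho>" using pph0 by (simp add: o_def)
    have dh: "(\<lambda>t. (\<nu> e t)^2 / (csqrt (Mc e t) + of_real (d e))^2) holomorphic_on ball 0 \<rho>"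
    proof (rule holomorphic_on_divide)
      show "(\<lambda>t. (\<nu> e t)^2) holomorphic_on ball 0 \<rho>" by (intro holomorphic_intros nuh)
      show "(\<lambda>t. (csqrt (Mc e t) + of_real (d e))^2) holomorphic_on ball 0 \<rho>" by (intro holomorphic_intros cshol)
      show "\<And>t. t \<in> ball 0 \<rho> \<Longrightarrow> (csqrt (Mc e t) + of_real (d e))^2 \<noteq> 0" using denom[OF e] by simp
    qed
    show ?thesis by (rule holomorphic_on_mult[OF dh pph])
  qed
  have Hhol: "H holomorphic_on ball 0 \<rho>"
    unfolding H_def[abs_def] by (rule holomorphic_on_sum) (use termhol in auto)
  have REAL: "energy Edges Ee (p + ((\<Sum>j=1..k-1. (y^j * x^j) *\<^sub>R pp j) + x^k *\<^sub>R Q)) - energy Edges Ee p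
      = Re ((of_real x)^(2*k) * H (of_real x))" if x: "\<bar>x\<bar> < \<rho>" for x
  proof -
    define zx where "zx = p + ((\<Sum>j=1..k-1. (y^j * x^j) *\<^sub>R pp j) + x^k *\<^sub>R Q)"
    define nx where "nx e = norm (zx $ fst e - zx $ snd e)" for e
    have xb: "complex_of_real x \<in> ball 0 \<rho>" using x by simp
    have xb1: "complex_of_real x \<in> ball 0 1" using x \<rho>1 by simp
    have per: "complex_of_real (Ee e (nx e) - Ee e (d e)) = (of_real x)^(2*k) *
        ((\<nu> e (of_real x))^2 / (csqrt (Mc e (of_real x)) + of_real (d e))^2 * PP e (csqrt (Mc e (of_real x))))"
      if e: "e \<in> Edges" for e
    proof -
      define c where "c = csqrt (Mc e (of_real x))"
      have Mcx: "Mc e (of_real x) = of_real ((nx e)^2)" unfolding nx_def zx_def by (rule RI)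
      have cx: "c = of_real (nx e)" unfolding c_def Mcx by (simp add: csqrt_of_real nx_def)
      have lt: "norm (c - of_real (d e)) < min (rr e) (d e)" using P2[OF e xb] by (simp add: c_def)
      have "norm (c - of_real (d e)) = \<bar>nx e - d e\<bar>" unfolding cx of_real_diff[symmetric] norm_of_real ..
      then have nxb: "nx e \<in> ball (d e) (rr e)" using lt by (simp add: dist_real_def abs_minus_commute)
      have idE: "complex_of_real (Ee e (nx e) - Ee e (d e)) = (c - of_real (d e))^2 * PP e c"
        using PPid[OF e nxb] cx by simp
      have cd: "c + of_real (d e) \<noteq> 0" using denom[OF e xb] by (simp add: c_def)
      have csq: "c^2 = Mc e (of_real x)" unfolding c_def by (rule power2_csqrt)
      have prod: "(c - of_real (d e)) * (c + of_real (d e)) = (of_real x)^k * \<nu> e (of_real x)"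
      proof -
        have "(c - of_real (d e)) * (c + of_real (d e)) = c^2 - of_real ((d e)^2)"
          by (simp add: power2_eq_square algebra_simps)
        also have "\<dots> = (of_real x)^k * \<nu> e (of_real x)" unfolding csq by (rule ID1[OF e xb1])
        finally show ?thesis .
      qed
      have cm: "c - of_real (d e) = (of_real x)^k * \<nu> e (of_real x) / (c + of_real (d e))"
        using prod cd by (simp add: field_simps)
      have "(c - of_real (d e))^2 = (of_real x)^(2*k) * ((\<nu> e (of_real x))^2 / (c + of_real (d e))^2)"
        unfolding cm by (simp add: power_divide power_mult_distrib power_mult mult.commute)
      then show ?thesis using idE by (simp add: c_def mult.assoc)
    qed
    have "energy Edges Ee zx - energy Edges Ee p = (\<Sum>e\<in>Edges. Ee e (nx e) - Ee e (d e))"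
      unfolding energy_def nx_def d_def by (simp add: sum_subtractf)
    then have "complex_of_real (energy Edges Ee zx - energy Edges Ee p) = (\<Sum>e\<in>Edges. complex_of_real (Ee e (nx e) - Ee e (d e)))"
      by simp
    also have "\<dots> = (\<Sum>e\<in>Edges. (of_real x)^(2*k) *
        ((\<nu> e (of_real x))^2 / (csqrt (Mc e (of_real x)) + of_real (d e))^2 * PP e (csqrt (Mc e (of_real x)))))"
      by (rule sum.cong) (use per in auto)
    also have "\<dots> = (of_real x)^(2*k) * H (of_real x)"
      unfolding H_def by (simp add: sum_distrib_left)
    finally have "complex_of_real (energy Edges Ee zx - energy Edges Ee p) = (of_real x)^(2*k) * H (of_real x)" .
    then have "Re (complex_of_real (energy Edges Ee zx - energy Edges Ee p)) = Re ((of_real x)^(2*k) * H (of_real x))"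
      by (rule arg_cong)
    then show ?thesis by (simp add: zx_def)
  qed
  have Ghol: "(\<lambda>w. w^(2*k) * H w) holomorphic_on ball 0 \<rho>" by (intro holomorphic_intros Hhol)
  have "(vderiv ^^ i) (\<lambda>t. energy Edges Ee (p + ((\<Sum>j=1..k-1. (y^j * t^j) *\<^sub>R pp j) + t^k *\<^sub>R Q))
            - energy Edges Ee p) 0 = Re ((deriv ^^ i) (\<lambda>w. w^(2*k) * H w) (of_real 0))"
    by (rule real_restrict_deriv[OF Ghol]) (use REAL \<rho>pos in auto)
  also have "(deriv ^^ i) (\<lambda>w. w^(2*k) * H w) (of_real 0) = 0"
    using deriv_zero_factor[OF Hhol \<rho>pos i] by simp
  finally show ?thesis by simp
qed



lemma cover_part:
  fixes pp :: "nat \<Rightarrow> 'a::euclidean_space" and g :: "'a \<Rightarrow> real" and Kbar :: "'a set"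
  assumes lg: "linear g" and g1: "g (pp 1) = 1" and ppK: "\<forall>j\<in>{2..k-1}. pp j \<in> Kbar"
    and KbS: "subspace Kbar" and g0: "\<forall>b\<in>Kbar. g b = 0" and k2: "k \<ge> 2"
    and dec: "V \<subseteq> {a + b | a b. a \<in> span {pp 1} \<and> b \<in> Kbar}" and \<delta>: "0 < \<delta>"
  shows "\<exists>r>0. \<forall>x\<in>V. norm x < r \<longrightarrow> (\<exists>z0\<in>{(y, q). q \<in> Kbar \<and> norm (y, q) = 1}. \<exists>t\<in>{0..\<delta>}.
           x = (\<lambda>t (y, q). (\<Sum>j=1..k-1. (y^j * t^j) *\<^sub>R pp j) + (t^k) *\<^sub>R q) t z0)"
proof -
  define wv where "wv x = x - (\<Sum>j=1..k-1. (g x)^j *\<^sub>R pp j)" for x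
  define Hd where "Hd x = (g x / \<delta>)^2 + (norm (wv x) / \<delta>^k)^2" for x
  have bl: "bounded_linear g" using lg by (simp add: linear_conv_bounded_linear)
  have gc: "isCont g x" for x by (rule linear_continuous_at[OF bl])
  have Hc: "isCont Hd 0" unfolding Hd_def[abs_def] wv_def using \<delta> by (intro continuous_intros gc) auto
  have g00: "g 0 = 0" using lg by (rule linear_0)
  have s0: "(\<Sum>j=1..k-1. (0::real)^j *\<^sub>R pp j) = 0" by (rule sum.neutral) auto
  have H0: "Hd 0 = 0" unfolding Hd_def wv_def g00 s0 by simp
  obtain r where r: "r > 0" "\<forall>x'. dist x' 0 < r \<longrightarrow> dist (Hd x') (Hd 0) < 1"
    using Hc unfolding continuous_at_eps_delta by (meson zero_less_one)
  have split: "(\<Sum>j=1..k-1. f j) = f 1 + (\<Sum>j=2..k-1. f j)" for f :: "nat \<Rightarrow> 'a"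
    using sum.atLeast_Suc_atMost[of 1 "k-1" f] k2 by (simp add: numeral_2_eq_2)
  show ?thesis
  proof (intro exI[of _ r] conjI ballI impI r(1))
    fix x assume xV: "x \<in> V" and xr: "norm x < r"
    have Hx: "Hd x < 1" using r(2)[rule_format, of x] xr H0 by (simp add: dist_norm)
    define s where "s = g x"
    define w where "w = wv x"
    have xw: "x = (\<Sum>j=1..k-1. s^j *\<^sub>R pp j) + w" unfolding w_def wv_def s_def by simp
    obtain a b where ab: "x = a + b" "a \<in> span {pp 1}" "b \<in> Kbar" using dec xV by blast
    obtain c where c: "a = c *\<^sub>R pp 1" using ab(2) by (auto simp: span_singleton)
    have sc: "s = c" unfolding s_def ab(1) c using g1 g0 ab(3) by (simp add: linear_add[OF lg] linear_scale[OF lg])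
    have wK: "w \<in> Kbar"
    proof -
      have "w = b - (\<Sum>j=2..k-1. s^j *\<^sub>R pp j)"
        using xw unfolding split ab(1) c sc by (simp add: algebra_simps)
      moreover have "(\<Sum>j=2..k-1. s^j *\<^sub>R pp j) \<in> Kbar"
        by (rule subspace_sum[OF KbS]) (use ppK subspace_scale[OF KbS] in auto)
      ultimately show ?thesis using subspace_diff[OF KbS ab(3)] by simp
    qed
    show "\<exists>z0\<in>{(y, q). q \<in> Kbar \<and> norm (y, q) = 1}. \<exists>t\<in>{0..\<delta>}.
           x = (\<lambda>t (y, q). (\<Sum>j=1..k-1. (y^j * t^j) *\<^sub>R pp j) + (t^k) *\<^sub>R q) t z0"
    proof (cases "s = 0 \<and> w = 0")
      case True
      have x0: "x = 0" using xw True s0 by simp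
      show ?thesis
      proof (intro bexI)
        show "x = (\<lambda>t (y, q). (\<Sum>j=1..k-1. (y^j * t^j) *\<^sub>R pp j) + (t^k) *\<^sub>R q) 0 (1, 0)"
          using x0 s0 by simp
        show "(1::real, 0) \<in> {(y, q). q \<in> Kbar \<and> norm (y, q) = 1}" using subspace_0[OF KbS] by simp
        show "(0::real) \<in> {0..\<delta>}" using \<delta> by simp
      qed
    next
      case False
      define h where "h \<tau> = (s / \<tau>)^2 + (norm w / \<tau>^k)^2" for \<tau> :: real
      have hd: "h \<delta> < 1" using Hx unfolding h_def Hd_def s_def w_def by simp
      obtain t0 where t0: "0 < t0" "t0 \<le> \<delta>" "h t0 \<ge> 1"
      proof (cases "s = 0")
        case False
        define t0 where "t0 = min \<delta> \<bar>s\<bar>"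
        have "0 < t0" "t0 \<le> \<delta>" "t0 \<le> \<bar>s\<bar>" using False \<delta> by (auto simp: t0_def)
        moreover have "1 \<le> (s / t0)^2"
        proof -
          have "t0^2 \<le> s^2" using \<open>t0 \<le> \<bar>s\<bar>\<close> \<open>0 < t0\<close>
            by (metis abs_of_pos power2_abs power_mono less_imp_le)
          then show ?thesis using \<open>0 < t0\<close> by (simp add: power_divide)
        qed
        moreover have "(s / t0)^2 \<le> h t0" unfolding h_def by simp
        ultimately show ?thesis using that by fastforce
      next
        case True
        then have wn: "w \<noteq> 0" using False by simp
        define t0 where "t0 = min \<delta> (min 1 (norm w))"
        have t0p: "0 < t0" "t0 \<le> \<delta>" "t0 \<le> 1" "t0 \<le> norm w" using wn \<delta> by (auto simp: t0_def)
        have tk: "t0^k \<le> t0"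
        proof -
          have "t0^k \<le> t0^1" by (rule power_decreasing) (use t0p k2 in auto)
          then show ?thesis by simp
        qed
        have tkp: "0 < t0^k" using t0p by simp
        have "1 \<le> norm w / t0^k"
          using tk t0p tkp by (simp add: field_simps)
        then have "1 \<le> (norm w / t0^k)^2" by (simp add: one_le_power)
        moreover have "(norm w / t0^k)^2 \<le> h t0" unfolding h_def by simp
        ultimately show ?thesis using that t0p by fastforce
      qed
      have hc: "continuous_on {t0..\<delta>} h"
        unfolding h_def using t0(1) by (intro continuous_intros) auto
      obtain \<tau> where \<tau>: "\<tau> \<ge> t0" "\<tau> \<le> \<delta>" "h \<tau> = 1"
        using IVT2'[of h \<delta> 1 t0] hd t0 hc by auto
      have \<tau>p: "\<tau> > 0" using \<tau> t0 by simp
      define q where "q = (1 / \<tau>^k) *\<^sub>R w"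
      have qK: "q \<in> Kbar" unfolding q_def using subspace_scale[OF KbS wK] by simp
      have nq: "norm q = norm w / \<tau>^k" unfolding q_def using \<tau>p by simp
      have nyq: "norm (s / \<tau>, q) = 1"
      proof -
        have "(norm (s / \<tau>))^2 = (s / \<tau>)^2" by (simp only: real_norm_def power2_abs)
        then show ?thesis unfolding norm_Pair nq using \<tau>(3) by (simp add: h_def)
      qed
      have eq: "(\<lambda>t (y, q). (\<Sum>j=1..k-1. (y^j * t^j) *\<^sub>R pp j) + (t^k) *\<^sub>R q) \<tau> (s / \<tau>, q) = x"
      proof -
        have "(\<Sum>j=1..k-1. ((s / \<tau>)^j * \<tau>^j) *\<^sub>R pp j) = (\<Sum>j=1..k-1. s^j *\<^sub>R pp j)"
          using \<tau>p by (intro sum.cong) (auto simp: power_divide)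
        moreover have "(\<tau>^k) *\<^sub>R q = w" unfolding q_def using \<tau>p by simp
        ultimately show ?thesis using xw by simp
      qed
      show ?thesis
        by (rule bexI[of _ "(s / \<tau>, q)"], rule bexI[of _ \<tau>]) (use eq \<tau> \<tau>p qK nyq in auto)
    qed
  qed
qed




theorem lemma7p5:
  fixes p :: "real^'d^'n" and vert :: "nat \<Rightarrow> 'n" and ax :: "nat \<Rightarrow> 'd"
    and l k :: nat and Edges :: "('n \<times> 'n) set" and Kbar :: "(real^'d^'n) set"
    and Ee :: "'n \<times> 'n \<Rightarrow> real \<Rightarrow> real" and pp :: "nat \<Rightarrow> real^'d^'n"
  assumes "bij_betw vert {1..CARD('n)} UNIV" and "bij_betw ax {1..CARD('d)} UNIV"
    and "simple_graph_edges Edges"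
    and "is_pinned vert ax l p"
    and "dim (Kspace vert ax l Edges p) = 1"
    and "is_complement (pinned_space vert ax l) (Kspace vert ax l Edges p) Kbar"
    and "stiff_bar_energy Edges p Ee"
    and "k \<ge> 2"
    and "is_flex vert ax l Edges p (\<lambda>t. p + (\<Sum>j=1..k-1. (t^j) *\<^sub>R pp j)) 1 (k-1)"
    and "norm (pp 1) = 1"
    and "\<forall>j\<in>{2..k-1}. pp j \<in> Kbar"
  shows "\<exists>\<epsilon>>0. indicative (pinned_space vert ax l) \<epsilon>
            {(y, q). q \<in> Kbar \<and> norm (y, q) = 1}
            (\<lambda>t (y, q). (\<Sum>j=1..k-1. (y^j * t^j) *\<^sub>R pp j) + (t^k) *\<^sub>R q)
            (\<lambda>\<delta>. energy Edges Ee (p + \<delta>) - energy Edges Ee p)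
            k"
proof -
  define V where "V = pinned_space vert ax l"
  define K where "K = Kspace vert ax l Edges p"
  have k2: "k \<ge> 2" using assms(8) .
  have ppK: "\<forall>j\<in>{2..k-1}. pp j \<in> Kbar" using assms(11) .
  have VS: "subspace V" unfolding V_def by (rule pinned_subspace)
  have KS: "subspace K" unfolding K_def by (rule Kspace_subspace)
  have KbS: "subspace Kbar" and KbV: "Kbar \<subseteq> V" and KKb: "K \<inter> Kbar = {0}"
    and dec0: "V \<subseteq> {a + b | a b. a \<in> K \<and> b \<in> Kbar}"
    using assms(6) unfolding is_complement_def V_def K_def by auto
  obtain \<epsilon>0 where e0: "\<epsilon>0 > 0" "\<forall>t\<in>ball 0 \<epsilon>0. pinned_pos vert ax l (p + (\<Sum>j=1..k-1. (t^j) *\<^sub>R pp j))"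
    using assms(9) unfolding is_flex_def by auto
  have kv: "\<forall>e\<in>Edges. k_vanishing (k-1) (\<lambda>t. meas (p + (\<Sum>j=1..k-1. (t^j) *\<^sub>R pp j)) e)"
    using assms(9) unfolding is_flex_def by auto
  have pV: "p \<in> V" using assms(4) unfolding is_pinned_def V_def pinned_space_def by auto
  have split: "(\<Sum>j=1..k-1. f j) = f 1 + (\<Sum>j=2..k-1. f j)" for f :: "nat \<Rightarrow> real^'d^'n"
    using sum.atLeast_Suc_atMost[of 1 "k-1" f] k2 by (simp add: numeral_2_eq_2)
  have pp1V: "pp 1 \<in> V"
  proof -
    define t where "t = \<epsilon>0 / 2"
    have tp: "t > 0" "t \<in> ball 0 \<epsilon>0" using e0(1) by (auto simp: t_def)
    have "p + (\<Sum>j=1..k-1. (t^j) *\<^sub>R pp j) \<in> V" using e0(2) tp(2) unfolding V_def pinned_space_def by auto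
    then have "(p + (\<Sum>j=1..k-1. (t^j) *\<^sub>R pp j)) - p \<in> V" using subspace_diff[OF VS _ pV] by blast
    then have A: "t *\<^sub>R pp 1 + (\<Sum>j=2..k-1. (t^j) *\<^sub>R pp j) \<in> V" unfolding split by simp
    have B: "(\<Sum>j=2..k-1. (t^j) *\<^sub>R pp j) \<in> V"
    proof (rule subspace_sum[OF VS])
      fix j assume "j \<in> {2..k-1}"
      then have "pp j \<in> V" using ppK KbV by blast
      then show "(t^j) *\<^sub>R pp j \<in> V" by (rule subspace_scale[OF VS])
    qed
    have "t *\<^sub>R pp 1 \<in> V" using subspace_diff[OF VS A B] by simp
    then have "(1/t) *\<^sub>R (t *\<^sub>R pp 1) \<in> V" using subspace_scale[OF VS] by blast
    then show ?thesis using tp by simp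
  qed
  have van: "\<forall>e\<in>Edges. \<forall>i\<in>{1..k-1}. (deriv ^^ i) (Ncf p pp k e) 0 = 0"
    using kv Ncf_vanish by blast
  have pp1K: "pp 1 \<in> K"
  proof -
    have "(p $ fst e - p $ snd e) \<bullet> (pp 1 $ fst e - pp 1 $ snd e) = 0" if e: "e \<in> Edges" for e
    proof -
      have "1 \<in> {1..k-1}" using k2 by simp
      then have "(deriv ^^ 1) (Ncf p pp k e) 0 = 0" using van e by blast
      then have "deriv (Ncf p pp k e) 0 = 0" by simp
      then have "(\<Sum>i\<in>UNIV. 2 * complex_of_real (p $ fst e $ i - p $ snd e $ i) *
              complex_of_real (pp 1 $ fst e $ i - pp 1 $ snd e $ i)) = 0"
        using Ncf_deriv1[OF k2, of p pp e] by (simp only:)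
      moreover have "complex_of_real (2 * (\<Sum>i\<in>UNIV. (p $ fst e $ i - p $ snd e $ i) * (pp 1 $ fst e $ i - pp 1 $ snd e $ i)))
        = (\<Sum>i\<in>UNIV. 2 * complex_of_real (p $ fst e $ i - p $ snd e $ i) *
              complex_of_real (pp 1 $ fst e $ i - pp 1 $ snd e $ i))"
        by (simp only: of_real_mult of_real_sum sum_distrib_left of_real_numeral mult.assoc)
      ultimately have "complex_of_real (2 * (\<Sum>i\<in>UNIV. (p $ fst e $ i - p $ snd e $ i) * (pp 1 $ fst e $ i - pp 1 $ snd e $ i))) = 0"
        by simp
      then have "2 * (\<Sum>i\<in>UNIV. (p $ fst e $ i - p $ snd e $ i) * (pp 1 $ fst e $ i - pp 1 $ snd e $ i)) = 0"
        by (simp only: of_real_eq_0_iff)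
      then have "(\<Sum>i\<in>UNIV. (p $ fst e $ i - p $ snd e $ i) * (pp 1 $ fst e $ i - pp 1 $ snd e $ i)) = 0"
        by simp
      then show ?thesis by (simp add: inner_vec_def)
    qed
    then show ?thesis using pp1V unfolding K_def Kspace_def V_def by auto
  qed
  have pp1nz: "pp 1 \<noteq> 0" using assms(10) by auto
  have Kspan: "K \<subseteq> span {pp 1}"
    by (rule dim1_span[OF KS _ pp1K pp1nz]) (use assms(5) in \<open>simp add: K_def\<close>)
  have dec: "V \<subseteq> {a + b | a b. a \<in> span {pp 1} \<and> b \<in> Kbar}" using dec0 Kspan by blast
  have pp1nKb: "pp 1 \<notin> Kbar" using pp1K KKb pp1nz by blast
  obtain g :: "real^'d^'n \<Rightarrow> real" where g: "linear g" "g (pp 1) = 1" "\<forall>b\<in>Kbar. g b = 0"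
    using functional_exists[OF KbS pp1nKb] by blast
  have ppV: "pp j \<in> V" if "j \<in> {1..k-1}" for j
  proof (cases "j = 1")
    case True then show ?thesis using pp1V by simp
  next
    case False then have "j \<in> {2..k-1}" using that by auto
    then show ?thesis using ppK KbV by blast
  qed
  have zV: "(\<Sum>j=1..k-1. (y^j * t^j) *\<^sub>R pp j) + (t^k) *\<^sub>R q \<in> V" if q: "q \<in> Kbar" for y t q
  proof (rule subspace_add[OF VS])
    show "(\<Sum>j=1..k-1. (y^j * t^j) *\<^sub>R pp j) \<in> V"
    proof (rule subspace_sum[OF VS])
      fix j assume "j \<in> {1..k-1}"
      then show "(y^j * t^j) *\<^sub>R pp j \<in> V" using ppV subspace_scale[OF VS] by blast
    qed
    show "(t^k) *\<^sub>R q \<in> V" using q KbV subspace_scale[OF VS] by blast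
  qed
  have gz: "g ((\<Sum>j=1..k-1. (y^j * t^j) *\<^sub>R pp j) + (t^k) *\<^sub>R q) = y * t" if q: "q \<in> Kbar" for y t q
  proof -
    have "g ((\<Sum>j=1..k-1. (y^j * t^j) *\<^sub>R pp j) + (t^k) *\<^sub>R q)
        = (\<Sum>j=1..k-1. (y^j * t^j) * g (pp j)) + t^k * g q"
      by (simp add: linear_add[OF g(1)] linear_sum[OF g(1)] linear_scale[OF g(1)] o_def)
    also have "\<dots> = (\<Sum>j=1..k-1. (y^j * t^j) * g (pp j))" using g(3) q by simp
    also have "\<dots> = y * t * g (pp 1) + (\<Sum>j=2..k-1. (y^j * t^j) * g (pp j))"
      using sum.atLeast_Suc_atMost[of 1 "k-1" "\<lambda>j. (y^j * t^j) * g (pp j)"] k2 by (simp add: numeral_2_eq_2)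
    also have "(\<Sum>j=2..k-1. (y^j * t^j) * g (pp j)) = 0"
      using ppK g(3) by (intro sum.neutral) auto
    finally show ?thesis using g(2) by simp
  qed
  have z00: "(\<Sum>j=1..k-1. (y^j * 0^j) *\<^sub>R pp j) + ((0::real)^k) *\<^sub>R q = 0" for y q
  proof -
    have "(\<Sum>j=1..k-1. (y^j * 0^j) *\<^sub>R pp j) = 0" by (rule sum.neutral) auto
    then show ?thesis using k2 by simp
  qed
  have y1: "\<bar>y\<bar> \<le> 1" if "norm (y, q) = 1" for y :: real and q :: "real^'d^'n"
  proof -
    have "norm y \<le> norm (y, q)" by (rule norm_fst_le)
    then show ?thesis using that by simp
  qed
  show ?thesis
  proof (rule exI[of _ 1], intro conjI)
    show "(0::real) < 1" by simp
    show "indicative (pinned_space vert ax l) 1 {(y, q). q \<in> Kbar \<and> norm (y, q) = 1}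
       (\<lambda>t (y, q). (\<Sum>j=1..k-1. (y^j * t^j) *\<^sub>R pp j) + (t^k) *\<^sub>R q)
       (\<lambda>\<delta>. energy Edges Ee (p + \<delta>) - energy Edges Ee p) k"
      unfolding indicative_def V_def[symmetric]
    proof (intro conjI)
      show "test_family V 1 {(y, q). q \<in> Kbar \<and> norm (y, q) = 1}
         (\<lambda>t (y, q). (\<Sum>j=1..k-1. (y^j * t^j) *\<^sub>R pp j) + (t^k) *\<^sub>R q)"
        unfolding test_family_def
      proof (intro conjI ballI)
        show "(0::real) < 1" by simp
        fix z0 :: "real \<times> (real^'d^'n)" assume "z0 \<in> {(y, q). q \<in> Kbar \<and> norm (y, q) = 1}"
        then obtain y q where z0: "z0 = (y, q)" "q \<in> Kbar" "norm (y, q) = 1" by blast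
        have fe: "(\<lambda>t. (\<lambda>t (y, q). (\<Sum>j=1..k-1. (y^j * t^j) *\<^sub>R pp j) + (t^k) *\<^sub>R q) t z0)
           = (\<lambda>t. (\<Sum>j\<in>{1..k-1}. t^j *\<^sub>R (y^j *\<^sub>R pp j)) + (t^k) *\<^sub>R q)"
          unfolding z0 by (simp add: mult.commute)
        show "real_analytic_on {0..1} (\<lambda>t. (\<lambda>t (y, q). (\<Sum>j=1..k-1. (y^j * t^j) *\<^sub>R pp j) + (t^k) *\<^sub>R q) t z0)"
          unfolding fe by (intro analytic_add analytic_sum analytic_monomial ballI finite_atLeastAtMost)
        show "(\<lambda>t (y, q). (\<Sum>j=1..k-1. (y^j * t^j) *\<^sub>R pp j) + (t^k) *\<^sub>R q) 0 z0 = 0"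
          unfolding z0 using z00 by simp
        show "(\<lambda>t (y, q). (\<Sum>j=1..k-1. (y^j * t^j) *\<^sub>R pp j) + (t^k) *\<^sub>R q) t z0 \<in> V" for t
          unfolding z0 using zV z0(2) by simp
        show "\<exists>t\<in>{0..1}. (\<lambda>t (y, q). (\<Sum>j=1..k-1. (y^j * t^j) *\<^sub>R pp j) + (t^k) *\<^sub>R q) t z0 \<noteq>
               (\<lambda>t (y, q). (\<Sum>j=1..k-1. (y^j * t^j) *\<^sub>R pp j) + (t^k) *\<^sub>R q) 0 z0"
        proof (rule bexI[of _ 1])
          show "(1::real) \<in> {0..1}" by simp
          show "(\<lambda>t (y, q). (\<Sum>j=1..k-1. (y^j * t^j) *\<^sub>R pp j) + (t^k) *\<^sub>R q) 1 z0 \<noteq>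
               (\<lambda>t (y, q). (\<Sum>j=1..k-1. (y^j * t^j) *\<^sub>R pp j) + (t^k) *\<^sub>R q) 0 z0"
          proof (cases "y = 0")
            case False
            have "g ((\<Sum>j=1..k-1. (y^j * 1^j) *\<^sub>R pp j) + (1^k) *\<^sub>R q) = y" using gz[OF z0(2), of y 1] by simp
            then have "(\<Sum>j=1..k-1. (y^j * 1^j) *\<^sub>R pp j) + ((1::real)^k) *\<^sub>R q \<noteq> 0"
              using False linear_0[OF g(1)] by auto
            then show ?thesis unfolding z0 using z00 by simp
          next
            case True
            have qn: "q \<noteq> 0" using z0(3) True by auto
            have "(\<Sum>j=1..k-1. (y^j * 1^j) *\<^sub>R pp j) = 0" using True by (intro sum.neutral) auto
            then show ?thesis unfolding z0 using z00 qn by simp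
          qed
        qed
      qed
      show "compact {(y::real, q). q \<in> Kbar \<and> norm (y, q) = 1}"
      proof -
        have eqS: "{(y::real, q). q \<in> Kbar \<and> norm (y, q) = 1} = (UNIV \<times> Kbar) \<inter> sphere (0::real \<times> (real^'d^'n)) 1"
          by auto
        have "closed ((UNIV \<times> Kbar) \<inter> sphere (0::real \<times> (real^'d^'n)) 1)"
          by (intro closed_Int closed_Times closed_UNIV closed_subspace[OF KbS] closed_sphere)
        moreover have "bounded ((UNIV \<times> Kbar) \<inter> sphere (0::real \<times> (real^'d^'n)) 1)"
          by (rule bounded_subset[OF bounded_sphere]) auto
        ultimately have "compact ((UNIV \<times> Kbar) \<inter> sphere (0::real \<times> (real^'d^'n)) 1)"
          by (simp add: compact_eq_bounded_closed)
        then show ?thesis by (simp only: eqS)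
      qed
      show "\<exists>U. {0..1} \<times> {(y, q). q \<in> Kbar \<and> norm (y, q) = 1} \<subseteq> U \<and>
          Ck_on (2 * k + 1) U (\<lambda>(t, z0). (\<lambda>t (y, q). (\<Sum>j=1..k-1. (y^j * t^j) *\<^sub>R pp j) + (t^k) *\<^sub>R q) t z0)"
      proof (intro exI[of _ UNIV] conjI subset_UNIV)
        have fe: "(\<lambda>(t, z0). (\<lambda>t (y, q). (\<Sum>j=1..k-1. (y^j * t^j) *\<^sub>R pp j) + (t^k) *\<^sub>R q) t z0)
          = (\<lambda>x::real \<times> real \<times> (real^'d^'n). (\<Sum>j\<in>{1..k-1}. ((fst (snd x))^j * (fst x)^j) *\<^sub>R pp j) + ((fst x)^k) *\<^sub>R snd (snd x))"
          by (auto simp: case_prod_beta)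
        have l1: "bounded_linear (\<lambda>x::real \<times> real \<times> (real^'d^'n). fst x)" by (rule bounded_linear_fst)
        have l2: "bounded_linear (\<lambda>x::real \<times> real \<times> (real^'d^'n). fst (snd x))"
          using bounded_linear_compose[OF bounded_linear_fst bounded_linear_snd] by (simp add: o_def)
        have l3: "bounded_linear (\<lambda>x::real \<times> real \<times> (real^'d^'n). snd (snd x))"
          using bounded_linear_compose[OF bounded_linear_snd bounded_linear_snd] by (simp add: o_def)
        have sm: "smooth_all (\<lambda>x::real \<times> real \<times> (real^'d^'n). (\<Sum>j\<in>{1..k-1}. ((fst (snd x))^j * (fst x)^j) *\<^sub>R pp j) + ((fst x)^k) *\<^sub>R snd (snd x))"
        proof (rule smooth_add)
          show "smooth_all (\<lambda>x::real \<times> real \<times> (real^'d^'n). \<Sum>j\<in>{1..k-1}. ((fst (snd x))^j * (fst x)^j) *\<^sub>R pp j)"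
          proof (rule smooth_sum, simp, intro ballI)
            fix j
            have "smooth_all (\<lambda>x::real \<times> real \<times> (real^'d^'n). (fst (snd x))^j *\<^sub>R (fst x)^j)"
              by (intro smooth_scaleR smooth_power smooth_linear l1 l2)
            then have "smooth_all (\<lambda>x::real \<times> real \<times> (real^'d^'n). ((fst (snd x))^j * (fst x)^j) *\<^sub>R pp j)"
              using smooth_scaleR[OF _ smooth_const] by simp
            then show "smooth_all (\<lambda>x::real \<times> real \<times> (real^'d^'n). ((fst (snd x))^j * (fst x)^j) *\<^sub>R pp j)" .
          qed
          show "smooth_all (\<lambda>x::real \<times> real \<times> (real^'d^'n). ((fst x)^k) *\<^sub>R snd (snd x))"
            by (intro smooth_scaleR smooth_power smooth_linear l1 l3)
        qed
        show "Ck_on (2 * k + 1) UNIV (\<lambda>(t, z0). (\<lambda>t (y, q). (\<Sum>j=1..k-1. (y^j * t^j) *\<^sub>R pp j) + (t^k) *\<^sub>R q) t z0)"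
          unfolding fe by (rule smooth_Ck[OF sm])
      qed
      show "\<forall>\<delta>. 0 < \<delta> \<and> \<delta> \<le> 1 \<longrightarrow> (\<exists>r>0. \<forall>q\<in>V. norm q < r \<longrightarrow>
          (\<exists>z0\<in>{(y, q). q \<in> Kbar \<and> norm (y, q) = 1}. \<exists>t\<in>{0..\<delta>}.
             q = (\<lambda>t (y, q). (\<Sum>j=1..k-1. (y^j * t^j) *\<^sub>R pp j) + (t^k) *\<^sub>R q) t z0))"
        using cover_part[OF g(1) g(2) ppK KbS g(3) k2 dec] by blast
      show "\<forall>z0\<in>{(y, q). q \<in> Kbar \<and> norm (y, q) = 1}. \<forall>i<2 * k.
          (vderiv ^^ i) (\<lambda>t. (\<lambda>\<delta>. energy Edges Ee (p + \<delta>) - energy Edges Ee p)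
             ((\<lambda>t (y, q). (\<Sum>j=1..k-1. (y^j * t^j) *\<^sub>R pp j) + (t^k) *\<^sub>R q) t z0)) 0 = 0"
      proof (intro ballI allI impI)
        fix z0 :: "real \<times> (real^'d^'n)" and i assume z0S: "z0 \<in> {(y, q). q \<in> Kbar \<and> norm (y, q) = 1}" and i: "i < 2 * k"
        then obtain y q where z0: "z0 = (y, q)" "norm (y, q) = 1" by blast
        show "(vderiv ^^ i) (\<lambda>t. (\<lambda>\<delta>. energy Edges Ee (p + \<delta>) - energy Edges Ee p)
             ((\<lambda>t (y, q). (\<Sum>j=1..k-1. (y^j * t^j) *\<^sub>R pp j) + (t^k) *\<^sub>R q) t z0)) 0 = 0"
          unfolding z0(1) using I4_part[OF assms(7) k2 van y1[OF z0(2)] i, of q] by simp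
      qed
    qed
  qed
qed

end
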